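(* Let $\beta>0$, $T>0$, let $V:\mathbb{R}^d\to\mathbb{R}$ be smooth with $\pi=e^{-V}$ a probability density, and let $L:=\Delta-\langle\nabla V,\nabla\cdot\rangle$. Let $\mu_1,\mu_2\geq0$ be two classical solutions of $\partial_t\mu=L\mu^{\beta+1}$ on $\mathbb{R}^d\times[0,T]$ such that $\int_0^T\int_{\mathbb{R}^d}\|\nabla\mu_i^{1+\beta}\|^2\,d\pi\,dt<\infty$ for $i=1,2$. Then $t\mapsto\|\mu_1(t)-\mu_2(t)\|_{L^1(\mathbb{R}^d,\pi)}$ is non-increasing; consequently, classical solutions of the Cauchy problem with given initial data satisfying this condition are unique.
   Context: $L^1(\mathbb{R}^d,\pi)$ is $L^1$ with respect to the measure $\pi(x)\,dx$. *)

theory Defs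
  imports "HOL-Analysis.Analysis"
begin

definition pdiff :: "('a::euclidean_space \<Rightarrow> real) \<Rightarrow> 'a \<Rightarrow> 'a \<Rightarrow> real" where
  "pdiff f b x = frechet_derivative f (at x) b"

fun Ck :: "nat \<Rightarrow> ('a::euclidean_space \<Rightarrow> real) \<Rightarrow> bool" where
  "Ck 0 f = continuous_on UNIV f"
| "Ck (Suc k) f = (f differentiable_on UNIV \<and> (\<forall>b\<in>Basis. Ck k (pdiff f b)))"

definition smooth :: "('a::euclidean_space \<Rightarrow> real) \<Rightarrow> bool" where
  "smooth f \<longleftrightarrow> (\<forall>k. Ck k f)"

definition grad :: "('a::euclidean_space \<Rightarrow> real) \<Rightarrow> 'a \<Rightarrow> 'a" where
  "grad f x = (\<Sum>b\<in>Basis. pdiff f b x *\<^sub>R b)"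

definition laplacian :: "('a::euclidean_space \<Rightarrow> real) \<Rightarrow> 'a \<Rightarrow> real" where
  "laplacian f x = (\<Sum>b\<in>Basis. pdiff (pdiff f b) b x)"

definition genL :: "('a::euclidean_space \<Rightarrow> real) \<Rightarrow> ('a \<Rightarrow> real) \<Rightarrow> 'a \<Rightarrow> real" where
  "genL V f x = laplacian f x - grad V x \<bullet> grad f x"

definition classical_solution ::
  "('a::euclidean_space \<Rightarrow> real) \<Rightarrow> real \<Rightarrow> real \<Rightarrow> (real \<Rightarrow> 'a \<Rightarrow> real) \<Rightarrow> bool" where
  "classical_solution V \<beta> T \<mu> \<longleftrightarrow>
     (\<forall>t\<in>{0..T}. \<forall>x. \<mu> t x \<ge> 0) \<and>
     continuous_on ({0..T} \<times> UNIV) (\<lambda>(t,x). \<mu> t x) \<and>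
     (\<forall>t\<in>{0..T}. Ck 2 (\<lambda>x. \<mu> t x powr (\<beta> + 1))) \<and>
     (\<forall>b\<in>Basis. continuous_on ({0..T} \<times> UNIV)
         (\<lambda>(t,x). pdiff (\<lambda>y. \<mu> t y powr (\<beta> + 1)) b x)) \<and>
     (\<forall>b\<in>Basis. \<forall>c\<in>Basis. continuous_on ({0..T} \<times> UNIV)
         (\<lambda>(t,x). pdiff (pdiff (\<lambda>y. \<mu> t y powr (\<beta> + 1)) b) c x)) \<and>
     (\<forall>x. \<forall>t\<in>{0..T}. ((\<lambda>s. \<mu> s x) has_real_derivative
         genL V (\<lambda>y. \<mu> t y powr (\<beta> + 1)) x) (at t within {0..T}))"

definition L1pi_dist :: "('a::euclidean_space \<Rightarrow> real) \<Rightarrow> ('a \<Rightarrow> real) \<Rightarrow> ('a \<Rightarrow> real) \<Rightarrow> ennreal" where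
  "L1pi_dist V f g = (\<integral>\<^sup>+ x. ennreal (\<bar>f x - g x\<bar> * exp (- V x)) \<partial>lborel)"

end

theory Submission
  imports Defs
begin

lemma grad_inner_Basis: "b \<in> Basis \<Longrightarrow> grad f x \<bullet> b = pdiff f b x"
  by (simp add: grad_def inner_sum_left inner_Basis if_distrib sum.delta cong: if_cong)

lemma has_derivative_grad:
  assumes "f differentiable (at x)"
  shows "(f has_derivative (\<lambda>h. grad f x \<bullet> h)) (at x)"
proof -
  have d: "(f has_derivative frechet_derivative f (at x)) (at x)"
    using assms frechet_derivative_works by blast
  have lin: "linear (frechet_derivative f (at x))" using d has_derivative_linear by blast
  have "frechet_derivative f (at x) h = grad f x \<bullet> h" for h
  proof -
    have "frechet_derivative f (at x) h = frechet_derivative f (at x) (\<Sum>b\<in>Basis. (h \<bullet> b) *\<^sub>R b)"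
      by (simp add: euclidean_representation)
    also have "\<dots> = (\<Sum>b\<in>Basis. (h \<bullet> b) * frechet_derivative f (at x) b)"
      using lin by (simp add: linear_sum linear_scale)
    also have "\<dots> = grad f x \<bullet> h"
      by (simp add: grad_def pdiff_def inner_sum_right mult.commute inner_commute)
    finally show ?thesis .
  qed
  then show ?thesis using d by (metis (no_types, lifting) ext)
qed

lemma pdiff_eq: "(f has_derivative f') (at x) \<Longrightarrow> pdiff f b x = f' b"
  unfolding pdiff_def using frechet_derivative_at by metis

lemma euclidean_inner_sum: "(x::'a::euclidean_space) \<bullet> y = (\<Sum>b\<in>Basis. (x \<bullet> b) * (y \<bullet> b))"
  by (metis euclidean_inner)

definition bx :: "real \<Rightarrow> 'a::euclidean_space set" where
  "bx k = cbox (-(k *\<^sub>R One)) (k *\<^sub>R One)"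

lemma mem_bx: "x \<in> bx k \<longleftrightarrow> (\<forall>b\<in>Basis. \<bar>x \<bullet> b\<bar> \<le> k)"
  by (auto simp: bx_def mem_box inner_minus_left abs_le_iff)

lemma not_bx_norm: "x \<notin> bx k \<Longrightarrow> norm x > k"
  unfolding mem_bx using Basis_le_norm by (meson not_le order_less_le_trans)

lemma norm_bx: "norm x \<le> k \<Longrightarrow> x \<in> bx k"
  using not_bx_norm by force

lemma compact_support_integrable:
  fixes f :: "'a::euclidean_space \<Rightarrow> 'b::euclidean_space"
  assumes "continuous_on UNIV f" "\<And>x. norm x > r \<Longrightarrow> f x = 0"
  shows "f integrable_on UNIV"
proof -
  have "f integrable_on bx r"
    unfolding bx_def by (rule integrable_continuous) (rule continuous_on_subset[OF assms(1)], auto)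
  then show ?thesis
    by (rule integrable_on_superset) (use assms(2) not_bx_norm in auto)
qed

lemma integral_bx:
  fixes f :: "'a::euclidean_space \<Rightarrow> 'b::euclidean_space"
  assumes "\<And>x. norm x > r \<Longrightarrow> f x = 0" "r \<le> k"
  shows "integral UNIV f = integral (bx k) f"
proof -
  have "integral UNIV f = integral UNIV (\<lambda>x. if x \<in> bx k then f x else 0)"
    by (rule integral_cong) (use assms not_bx_norm in force)
  also have "\<dots> = integral (bx k) f" by (rule integral_restrict_UNIV)
  finally show ?thesis .
qed

lemma deriv_zero_outside:
  fixes G :: "'a::real_normed_vector \<Rightarrow> 'b::real_normed_vector"
  assumes G: "(G has_derivative G') (at x)"
    and supp: "\<And>x. norm x > r \<Longrightarrow> G x = 0" and x: "norm x > r"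
  shows "G' = (\<lambda>_. 0)"
proof -
  have "open {x::'a. r < norm x}"
    by (intro open_Collect_less continuous_intros)
  then have "((\<lambda>_. 0) has_derivative G') (at x)"
    by (rule has_derivative_transform_within_open[OF G]) (use x supp in auto)
  then show ?thesis using has_derivative_unique has_derivative_const by blast
qed

lemma translation_integral:
  fixes G :: "'a::euclidean_space \<Rightarrow> real"
  assumes cont: "continuous_on UNIV G" and supp: "\<And>x. norm x > r \<Longrightarrow> G x = 0"
  shows "((\<lambda>x. G (x + c)) has_integral integral UNIV G) UNIV"
proof -
  define a :: 'a where "a = -(r *\<^sub>R One)"
  define b :: 'a where "b = r *\<^sub>R One"
  have bxe: "bx r = cbox a b" by (simp add: bx_def a_def b_def)
  have GI: "(G has_integral integral UNIV G) (cbox a b)"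
  proof -
    have "G integrable_on cbox a b"
      by (rule integrable_continuous) (rule continuous_on_subset[OF cont], auto)
    then show ?thesis using integral_bx[where f=G and r=r and k=r] supp bxe
      by (simp add: integrable_integral)
  qed
  have "((\<lambda>x. G (1 *\<^sub>R x + c)) has_integral (integral UNIV G /\<^sub>R 1 ^ DIM('a)))
               (cbox ((a - c) /\<^sub>R 1) ((b - c) /\<^sub>R 1))"
    using has_integral_affinity_iff[of 1 G c] GI by simp
  then have 1: "((\<lambda>x. G (x + c)) has_integral integral UNIV G) (cbox (a - c) (b - c))" by simp
  show ?thesis
  proof (rule has_integral_on_superset[OF 1])
    fix x assume "x \<notin> cbox (a - c) (b - c)"
    then have "x + c \<notin> cbox a b" by (fastforce simp: mem_box inner_add_left inner_diff_left)
    then have "x + c \<notin> bx r" using bxe by simp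
    then show "G (x + c) = 0" using supp not_bx_norm by blast
  qed auto
qed

lemma ibp_basis:
  fixes G :: "'a::euclidean_space \<Rightarrow> real"
  assumes G: "\<And>x. (G has_derivative G' x) (at x)"
    and cont: "continuous_on UNIV (\<lambda>x. G' x b)"
    and supp: "\<And>x. norm x > r \<Longrightarrow> G x = 0"
    and b: "b \<in> Basis" and r: "r \<ge> 0"
  shows "((\<lambda>x. G' x b) has_integral 0) UNIV"
proof -
  have z: "G' x b = 0" if "norm x > r" for x
    using deriv_zero_outside[OF G supp that] by simp
  obtain M where M: "\<And>y. y \<in> cball 0 r \<Longrightarrow> norm (G' y b) \<le> M"
    using compact_imp_bounded[OF compact_continuous_image[OF continuous_on_subset[OF cont] compact_cball]]
    unfolding bounded_iff by blast
  define M' where "M' = max M 0"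
  have M': "\<bar>G' y b\<bar> \<le> M'" for y
    using M[of y] z[of y] by (cases "norm y \<le> r") (auto simp: M'_def)
  have contG: "continuous_on UNIV G"
    using G has_derivative_continuous continuous_at_imp_continuous_on by blast
  define h :: "nat \<Rightarrow> real" where "h n = inverse (real (Suc n))" for n
  have hpos: "h n > 0" "h n \<le> 1" for n by (auto simp: h_def field_simps)
  define f where "f n x = (G (x + h n *\<^sub>R b) - G x) / h n" for n x
  have Gint: "G integrable_on UNIV"
    by (rule compact_support_integrable[OF contG supp])
  have fint: "(f n has_integral 0) UNIV" for n
  proof -
    have "((\<lambda>x. G (x + h n *\<^sub>R b) - G x) has_integral (integral UNIV G - integral UNIV G)) UNIV"
      by (intro has_integral_diff translation_integral[OF contG supp] integrable_integral[OF Gint])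
    from has_integral_divide[OF this, of "h n"]
    have "((\<lambda>x. (G (x + h n *\<^sub>R b) - G x) / h n) has_integral 0) UNIV" by simp
    then show ?thesis by (simp add: f_def[abs_def])
  qed
  have phi: "((\<lambda>s. G (x + s *\<^sub>R b)) has_real_derivative G' (x + s *\<^sub>R b) b) (at s)" for x s
  proof -
    have 1: "((\<lambda>s. x + s *\<^sub>R b) has_derivative (\<lambda>s'. s' *\<^sub>R b)) (at s)"
      by (auto intro!: derivative_eq_intros)
    have "((\<lambda>s. G (x + s *\<^sub>R b)) has_derivative (\<lambda>s'. G' (x + s *\<^sub>R b) (s' *\<^sub>R b))) (at s)"
      by (rule has_derivative_compose[OF 1 G])
    moreover have "(\<lambda>s'. G' (x + s *\<^sub>R b) (s' *\<^sub>R b)) = (\<lambda>s'. G' (x + s *\<^sub>R b) b * s')"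
      using has_derivative_linear[OF G] by (auto simp: linear_scale)
    ultimately show ?thesis unfolding has_field_derivative_def
      by (simp add: mult.commute[of _ "G' (x + s *\<^sub>R b) b"])
  qed
  have conv: "(\<lambda>n. f n x) \<longlonglongrightarrow> G' x b" for x
  proof -
    have "(\<lambda>s. (G (x + (0 + s) *\<^sub>R b) - G (x + 0 *\<^sub>R b)) / s) \<midarrow>0\<rightarrow> G' x b"
      using DERIV_D[OF phi[of x 0]] by simp
    then have "(\<lambda>s. (G (x + s *\<^sub>R b) - G x) / s) \<midarrow>0\<rightarrow> G' x b" by simp
    moreover have "\<forall>n. h n \<noteq> 0" "h \<longlonglongrightarrow> 0"
      using hpos LIMSEQ_inverse_real_of_nat by (auto simp: h_def[abs_def]) 
    ultimately show ?thesis unfolding f_def 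
      using LIMSEQ_SEQ_conv[where X="\<lambda>s. (G (x + s *\<^sub>R b) - G x) / s" and a=0 and L="G' x b"]
      by blast
  qed
  define B where "B = (\<lambda>x::'a. if x \<in> bx (r+1) then M' else 0)"
  have Bint: "B integrable_on UNIV"
    unfolding B_def integrable_restrict_UNIV bx_def by (rule integrable_const)
  have bound: "norm (f n x) \<le> B x" for n x
  proof (cases "x \<in> bx (r+1)")
    case True
    obtain z where "0 < z" "z < h n" and eq: "G (x + h n *\<^sub>R b) - G (x + 0 *\<^sub>R b) = (h n - 0) * G' (x + z *\<^sub>R b) b"
      using MVT2[of 0 "h n" "\<lambda>s. G (x + s *\<^sub>R b)" "\<lambda>s. G' (x + s *\<^sub>R b) b"] hpos phi by blast
    then have "f n x = G' (x + z *\<^sub>R b) b" using hpos[of n] by (simp add: f_def)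
    then show ?thesis using M' True by (simp add: B_def)
  next
    case False
    then have nx: "norm x > r + 1" by (rule not_bx_norm)
    have "norm (x + h n *\<^sub>R b) \<ge> norm x - norm (h n *\<^sub>R b)" by (rule norm_diff_ineq)
    moreover have "norm (h n *\<^sub>R b) \<le> 1" using hpos[of n] b by simp
    ultimately have "norm (x + h n *\<^sub>R b) > r" using nx by linarith
    then show ?thesis using supp nx False by (simp add: f_def B_def)
  qed
  have "(\<lambda>x. G' x b) integrable_on UNIV" "(\<lambda>k. integral UNIV (f k)) \<longlonglongrightarrow> integral UNIV (\<lambda>x. G' x b)"
    using dominated_convergence[of f UNIV B "\<lambda>x. G' x b"] fint Bint bound conv
    by (auto simp: has_integral_integrable)
  moreover have "(\<lambda>k. integral UNIV (f k)) = (\<lambda>k. 0)" using fint integral_unique by blast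
  ultimately have "integral UNIV (\<lambda>x. G' x b) = 0"
    using LIMSEQ_unique[OF _ tendsto_const] by auto
  then show ?thesis using \<open>(\<lambda>x. G' x b) integrable_on UNIV\<close>
    by (metis integrable_integral)
qed

definition q :: "real \<Rightarrow> real" where "q r = (max 0 r)^2"

lemma q_deriv: "(q has_real_derivative (2 * max 0 r)) (at r)"
proof (cases "r = 0")
  case True
  have "(\<lambda>h. (q (0 + h) - q 0) / h) \<midarrow>0\<rightarrow> 0"
  proof (rule Lim_null_comparison)
    show "\<forall>\<^sub>F h in at 0. norm ((q (0 + h) - q 0) / h) \<le> \<bar>h\<bar>"
      by (intro always_eventually allI) (auto simp: q_def max_def power2_eq_square abs_mult divide_simps)
    show "((\<lambda>h::real. \<bar>h\<bar>) \<longlongrightarrow> 0) (at 0)"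
      using tendsto_rabs[OF tendsto_ident_at[of 0 UNIV]] by simp
  qed
  then show ?thesis using True by (simp add: DERIV_def)
next
  case False
  show ?thesis
  proof (cases "r > 0")
    case True
    have "((\<lambda>r. r^2) has_real_derivative 2 * r) (at r)"
      by (auto intro!: derivative_eq_intros)
    then have "(q has_real_derivative 2 * r) (at r)"
      by (rule has_field_derivative_transform_within_open[where S="{0<..}"]) (use True in \<open>auto simp: q_def\<close>)
    then show ?thesis using True by simp
  next
    case F: False
    then have "r < 0" using False by simp
    have "((\<lambda>r. 0) has_real_derivative 0) (at r)"
      by (auto intro!: derivative_eq_intros)
    then have "(q has_real_derivative 0) (at r)"
      by (rule has_field_derivative_transform_within_open[where S="{..<0}"]) (use \<open>r < 0\<close> in \<open>auto simp: q_def\<close>)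
    then show ?thesis using \<open>r < 0\<close> by simp
  qed
qed

definition psi :: "real \<Rightarrow> 'a::euclidean_space \<Rightarrow> real" where
  "psi R x = q (1 - inverse (R^2) * (x \<bullet> x))"

definition gpsi :: "real \<Rightarrow> 'a::euclidean_space \<Rightarrow> 'a" where
  "gpsi R x = (- 4 * inverse (R^2) * max 0 (1 - inverse (R^2) * (x \<bullet> x))) *\<^sub>R x"

lemma psi_deriv: "(psi R has_derivative (\<lambda>h. gpsi R x \<bullet> h)) (at x)"
proof -
  have 1: "((\<lambda>x. 1 - inverse (R^2) * (x \<bullet> x)) has_derivative (\<lambda>h. - (inverse (R^2) * (2 * (x \<bullet> h))))) (at x)"
    by (auto intro!: derivative_eq_intros simp: inner_commute)
  have "((\<lambda>x. q (1 - inverse (R^2) * (x \<bullet> x))) has_derivative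
      (\<lambda>h. (2 * max 0 (1 - inverse (R^2) * (x \<bullet> x))) * (- (inverse (R^2) * (2 * (x \<bullet> h)))))) (at x)"
    using has_derivative_compose[OF 1 q_deriv[unfolded has_field_derivative_def]] by (simp add: mult.commute)
  moreover have "(\<lambda>h. (2 * max 0 (1 - inverse (R^2) * (x \<bullet> x))) * (- (inverse (R^2) * (2 * (x \<bullet> h))))) = (\<lambda>h. gpsi R x \<bullet> h)"
    by (auto simp: gpsi_def algebra_simps)
  ultimately show ?thesis by (simp add: psi_def[abs_def])
qed

lemma gpsi_cont: "continuous_on UNIV (gpsi R)"
  unfolding gpsi_def by (intro continuous_intros)

lemma psi_cont: "continuous_on UNIV (psi R)"
  unfolding psi_def q_def by (intro continuous_intros)

lemma psi_nonneg: "0 \<le> psi R x" by (simp add: psi_def q_def)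

lemma psi_le1: "psi R x \<le> 1"
proof -
  have "0 \<le> inverse (R^2) * (x \<bullet> x)" by simp
  then have "max 0 (1 - inverse (R^2) * (x \<bullet> x)) \<le> 1" by simp
  then show ?thesis unfolding psi_def q_def by (simp add: power_le_one)
qed

lemma psi_supp: assumes "R > 0" "norm x > R" shows "psi R x = 0"
proof -
  have "R^2 < (norm x)^2" using assms by (simp add: power_strict_mono)
  then have "x \<bullet> x > R^2" by (simp add: dot_square_norm)
  then have "inverse (R^2) * (x \<bullet> x) > 1" using assms by (simp add: field_simps)
  then have "1 - inverse (R^2) * (x \<bullet> x) < 0" by simp
  then show ?thesis by (simp add: psi_def q_def)
qed

lemma gpsi_bound: assumes "R > 0" shows "norm (gpsi R x) \<le> 4 / R"
proof (cases "norm x \<le> R")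
  case True
  have m: "0 \<le> max 0 (1 - inverse (R^2) * (x \<bullet> x))" "max 0 (1 - inverse (R^2) * (x \<bullet> x)) \<le> 1" by auto
  have "norm (gpsi R x) = 4 * inverse (R^2) * max 0 (1 - inverse (R^2) * (x \<bullet> x)) * norm x"
    by (simp add: gpsi_def abs_mult)
  also have "\<dots> \<le> 4 * inverse (R^2) * 1 * R"
    by (intro mult_mono m True) (auto simp: assms)
  also have "\<dots> = 4 / R" using assms by (simp add: power2_eq_square field_simps)
  finally show ?thesis .
next
  case False
  have "R^2 < (norm x)^2" using assms False by (simp add: power_strict_mono)
  then have "x \<bullet> x > R^2" by (simp add: dot_square_norm)
  then have "inverse (R^2) * (x \<bullet> x) > 1" using assms by (simp add: field_simps)
  then have "1 - inverse (R^2) * (x \<bullet> x) < 0" by simp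
  then show ?thesis using assms by (simp add: gpsi_def)
qed

lemma psi_mono: assumes "0 < R" "R \<le> R'" shows "psi R x \<le> psi R' x"
proof -
  have "inverse (R'^2) * (x \<bullet> x) \<le> inverse (R^2) * (x \<bullet> x)"
    using assms by (intro mult_right_mono le_imp_inverse_le power_mono) auto
  then have "max 0 (1 - inverse (R^2) * (x \<bullet> x)) \<le> max 0 (1 - inverse (R'^2) * (x \<bullet> x))" by simp
  then show ?thesis unfolding psi_def q_def by (intro power_mono) auto
qed

lemma psi_lim: "(\<lambda>n. psi (real (Suc n)) x) \<longlonglongrightarrow> 1"
proof -
  have "(\<lambda>n. (inverse (real (Suc n)))^2 * (x \<bullet> x)) \<longlonglongrightarrow> 0^2 * (x \<bullet> x)"
    by (intro tendsto_intros LIMSEQ_inverse_real_of_nat)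
  then have "(\<lambda>n. q (1 - (inverse (real (Suc n)))^2 * (x \<bullet> x))) \<longlonglongrightarrow> q (1 - 0)"
    unfolding q_def by (intro tendsto_intros) auto
  then show ?thesis by (simp add: psi_def q_def power_inverse)
qed

definition eta :: "real \<Rightarrow> real \<Rightarrow> real" where "eta e r = r / sqrt (e + r^2)"
definition Phi :: "real \<Rightarrow> real \<Rightarrow> real" where "Phi e r = sqrt (e + r^2)"
definition etad :: "real \<Rightarrow> real \<Rightarrow> real" where "etad e r = e / ((e + r^2) * sqrt (e + r^2))"

lemma Phi_deriv: assumes "e > 0" shows "(Phi e has_real_derivative eta e r) (at r)"
proof -
  have p: "e + r^2 > 0" using assms by (simp add: add_pos_nonneg)
  show ?thesis unfolding Phi_def[abs_def] eta_def
    using p by (auto intro!: derivative_eq_intros simp: field_simps)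
qed

lemma eta_deriv: assumes "e > 0" shows "(eta e has_real_derivative etad e r) (at r)"
proof -
  have p: "e + r^2 > 0" using assms by (simp add: add_pos_nonneg)
  have s: "sqrt (e + r^2) * sqrt (e + r^2) = e + r^2" using p by simp
  show ?thesis unfolding eta_def[abs_def] etad_def
    using p s by (auto intro!: derivative_eq_intros simp: field_simps power2_eq_square)
qed

lemma etad_nonneg: "e > 0 \<Longrightarrow> etad e r \<ge> 0"
  by (simp add: etad_def add_pos_nonneg)

lemma epos: "e > 0 \<Longrightarrow> e + (r::real)^2 > 0" by (simp add: add_pos_nonneg)
lemma epos_ne: "e > 0 \<Longrightarrow> e + (r::real)^2 \<noteq> 0" using epos[of e r] by linarith
lemma epos_sq: "e > 0 \<Longrightarrow> sqrt (e + (r::real)^2) \<noteq> 0" using epos[of e r] by simp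

lemma etad_cont: "e > 0 \<Longrightarrow> continuous_on UNIV (etad e)"
  unfolding etad_def[abs_def]
  by (auto intro!: continuous_intros simp: epos_ne epos_sq)

lemma eta_cont: "e > 0 \<Longrightarrow> continuous_on UNIV (eta e)"
  unfolding eta_def[abs_def]
  by (auto intro!: continuous_intros simp: epos_ne epos_sq)

lemma Phi_cont: "continuous_on UNIV (Phi e)"
  unfolding Phi_def[abs_def] by (intro continuous_intros)

lemma eta_bound: assumes "e > 0" shows "\<bar>eta e r\<bar> \<le> 1"
proof -
  have "\<bar>r\<bar> \<le> sqrt (e + r^2)" using assms by (intro real_le_rsqrt) simp
  then show ?thesis using assms by (simp add: eta_def abs_div add_pos_nonneg)
qed

lemma Phi_bound: assumes "e > 0" "e \<le> 1" shows "0 \<le> Phi e r \<and> Phi e r \<le> \<bar>r\<bar> + 1"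
proof -
  have "e + r^2 \<le> (\<bar>r\<bar> + 1)^2" using assms by (simp add: power2_eq_square algebra_simps)
  then have "sqrt (e + r^2) \<le> \<bar>r\<bar> + 1" by (intro real_le_lsqrt) auto
  moreover have "0 \<le> e + r^2" using epos[OF assms(1), of r] by simp
  ultimately show ?thesis by (simp add: Phi_def)
qed

definition ee :: "nat \<Rightarrow> real" where "ee n = inverse (real (Suc n))"

lemma ee_pos: "ee n > 0" and ee_le1: "ee n \<le> 1"
  by (auto simp: ee_def field_simps)

lemma ee_lim: "ee \<longlonglongrightarrow> 0"
  unfolding ee_def[abs_def] by (rule LIMSEQ_inverse_real_of_nat)

lemma eta_lim: "(\<lambda>n. eta (ee n) r) \<longlonglongrightarrow> sgn r"
proof (cases "r = 0")
  case True then show ?thesis by (simp add: eta_def)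
next
  case False
  have "(\<lambda>n. r / sqrt (ee n + r^2)) \<longlonglongrightarrow> r / sqrt (0 + r^2)"
    using False by (intro tendsto_intros ee_lim) auto
  then show ?thesis by (simp add: eta_def real_sgn_eq)
qed

lemma Phi_lim: "(\<lambda>n. Phi (ee n) r) \<longlonglongrightarrow> \<bar>r\<bar>"
proof -
  have "(\<lambda>n. sqrt (ee n + r^2)) \<longlonglongrightarrow> sqrt (0 + r^2)"
    by (intro tendsto_intros ee_lim)
  then show ?thesis by (simp add: Phi_def)
qed

lemma Ck2_facts:
  assumes "Ck 2 f"
  shows "f differentiable (at x)"
    and "b \<in> Basis \<Longrightarrow> pdiff f b differentiable (at x)"
    and "b \<in> Basis \<Longrightarrow> c \<in> Basis \<Longrightarrow> continuous_on UNIV (pdiff (pdiff f b) c)"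
    and "b \<in> Basis \<Longrightarrow> continuous_on UNIV (pdiff f b)"
    and "continuous_on UNIV f"
proof -
  have A: "f differentiable_on UNIV" "\<And>b. b \<in> Basis \<Longrightarrow> pdiff f b differentiable_on UNIV"
    "\<And>b c. b \<in> Basis \<Longrightarrow> c \<in> Basis \<Longrightarrow> continuous_on UNIV (pdiff (pdiff f b) c)"
    using assms by (simp_all add: numeral_2_eq_2)
  show "f differentiable (at x)" using A(1) by (simp add: differentiable_on_def)
  show "b \<in> Basis \<Longrightarrow> pdiff f b differentiable (at x)" using A(2) by (simp add: differentiable_on_def)
  show "b \<in> Basis \<Longrightarrow> c \<in> Basis \<Longrightarrow> continuous_on UNIV (pdiff (pdiff f b) c)" using A(3) by simp
  show "b \<in> Basis \<Longrightarrow> continuous_on UNIV (pdiff f b)" using A(2) differentiable_imp_continuous_on by blast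
  show "continuous_on UNIV f" using A(1) differentiable_imp_continuous_on by blast
qed

lemma grad_cont:
  assumes "Ck 2 f" shows "continuous_on UNIV (grad f)"
  unfolding grad_def[abs_def] using Ck2_facts(4)[OF assms]
  by (intro continuous_intros) auto

lemma lap_cont:
  assumes "Ck 2 f" shows "continuous_on UNIV (laplacian f)"
  unfolding laplacian_def[abs_def] using Ck2_facts(3)[OF assms]
  by (intro continuous_intros) auto

lemma genL_cont:
  assumes "Ck 2 f" "Ck 2 V" shows "continuous_on UNIV (genL V f)"
  unfolding genL_def[abs_def] using lap_cont[OF assms(1)] grad_cont[OF assms(1)] grad_cont[OF assms(2)]
  by (intro continuous_intros) auto

lemma kato_smooth:
  fixes f1 f2 V \<psi> :: "'a::euclidean_space \<Rightarrow> real" and g\<psi> :: "'a \<Rightarrow> 'a"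
  assumes f1: "Ck 2 f1" and f2: "Ck 2 f2" and V: "Ck 2 V"
    and \<psi>d: "\<And>x. (\<psi> has_derivative (\<lambda>h. g\<psi> x \<bullet> h)) (at x)"
    and g\<psi>c: "continuous_on UNIV g\<psi>"
    and \<psi>0: "\<And>x. \<psi> x \<ge> 0"
    and \<psi>s: "\<And>x. norm x > r \<Longrightarrow> \<psi> x = 0" and r: "r \<ge> 0"
    and e: "e > 0"
  shows "integral UNIV (\<lambda>x. eta e (f1 x - f2 x) * (\<psi> x * exp (- V x) * (genL V f1 x - genL V f2 x)))
    \<le> integral UNIV (\<lambda>x. exp (- V x) * norm (g\<psi> x) * norm (grad f1 x - grad f2 x))"
proof -
  define \<pi> where "\<pi> x = exp (- V x)" for x
  define D where "D b x = pdiff f1 b x - pdiff f2 b x" for b x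
  define w where "w x = f1 x - f2 x" for x
  define Dv where "Dv x = grad f1 x - grad f2 x" for x
  have Dvb: "Dv x \<bullet> b = D b x" if "b \<in> Basis" for x b
    using that by (simp add: Dv_def D_def inner_diff_left grad_inner_Basis)
  have wd: "(w has_derivative (\<lambda>h. Dv x \<bullet> h)) (at x)" for x
    unfolding w_def Dv_def inner_diff_left
    by (intro has_derivative_diff has_derivative_grad Ck2_facts(1)[OF f1] Ck2_facts(1)[OF f2])
  have \<eta>d: "((\<lambda>x. eta e (w x)) has_derivative (\<lambda>h. etad e (w x) * (Dv x \<bullet> h))) (at x)" for x
    using has_derivative_compose[OF wd eta_deriv[OF e, unfolded has_field_derivative_def]]
    by (simp add: mult.commute)
  have \<pi>d: "(\<pi> has_derivative (\<lambda>h. \<pi> x * (- (grad V x \<bullet> h)))) (at x)" for x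
  proof -
    have "((\<lambda>x. - V x) has_derivative (\<lambda>h. - (grad V x \<bullet> h))) (at x)"
      by (intro has_derivative_minus has_derivative_grad Ck2_facts(1)[OF V])
    from has_derivative_compose[OF this DERIV_exp[unfolded has_field_derivative_def]]
    show ?thesis by (simp add: \<pi>_def[abs_def] mult.commute)
  qed
  have Dd: "(D b has_derivative (\<lambda>h. (grad (pdiff f1 b) x - grad (pdiff f2 b) x) \<bullet> h)) (at x)"
    if "b \<in> Basis" for b x
    unfolding D_def[abs_def] inner_diff_left
    by (intro has_derivative_diff has_derivative_grad Ck2_facts(2)[OF f1 that] Ck2_facts(2)[OF f2 that])
  define G where "G b x = \<psi> x * eta e (w x) * \<pi> x * D b x" for b x
  define G' where "G' b x h = \<psi> x * eta e (w x) * \<pi> x * ((grad (pdiff f1 b) x - grad (pdiff f2 b) x) \<bullet> h)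
     + ((\<psi> x * eta e (w x)) * (\<pi> x * (- (grad V x \<bullet> h))) + (\<psi> x * (etad e (w x) * (Dv x \<bullet> h)) + (g\<psi> x \<bullet> h) * eta e (w x)) * \<pi> x) * D b x"
    for b x h
  have Gd: "(G b has_derivative G' b x) (at x)" if "b \<in> Basis" for b x
    unfolding G_def[abs_def] G'_def
    by (intro has_derivative_mult \<psi>d \<eta>d \<pi>d Dd that)
  have G'b: "G' b x b = \<psi> x * eta e (w x) * \<pi> x * (pdiff (pdiff f1 b) b x - pdiff (pdiff f2 b) b x)
     + ((\<psi> x * eta e (w x)) * (\<pi> x * (- pdiff V b x)) + (\<psi> x * (etad e (w x) * D b x) + (g\<psi> x \<bullet> b) * eta e (w x)) * \<pi> x) * D b x"
    if "b \<in> Basis" for b x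
    using that by (simp add: G'_def Dvb inner_diff_left grad_inner_Basis)
  have \<psi>c: "continuous_on UNIV \<psi>"
    using \<psi>d has_derivative_continuous continuous_at_imp_continuous_on by blast
  have wc: "continuous_on UNIV w"
    unfolding w_def[abs_def] using Ck2_facts(5)[OF f1] Ck2_facts(5)[OF f2] by (intro continuous_intros)
  have \<eta>c: "continuous_on UNIV (\<lambda>x. eta e (w x))"
    by (rule continuous_on_compose2[OF eta_cont[OF e] wc]) auto
  have \<eta>dc: "continuous_on UNIV (\<lambda>x. etad e (w x))"
    by (rule continuous_on_compose2[OF etad_cont[OF e] wc]) auto
  have \<pi>c: "continuous_on UNIV \<pi>"
    unfolding \<pi>_def[abs_def] using Ck2_facts(5)[OF V] by (intro continuous_intros)
  have Dc: "continuous_on UNIV (D b)" if "b \<in> Basis" for b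
    unfolding D_def[abs_def] using Ck2_facts(4)[OF f1 that] Ck2_facts(4)[OF f2 that] by (intro continuous_intros)
  have G'c: "continuous_on UNIV (\<lambda>x. G' b x b)" if b: "b \<in> Basis" for b
  proof -
    have "continuous_on UNIV (\<lambda>x. \<psi> x * eta e (w x) * \<pi> x * (pdiff (pdiff f1 b) b x - pdiff (pdiff f2 b) b x)
     + ((\<psi> x * eta e (w x)) * (\<pi> x * (- pdiff V b x)) + (\<psi> x * (etad e (w x) * D b x) + (g\<psi> x \<bullet> b) * eta e (w x)) * \<pi> x) * D b x)"
      using \<psi>c \<eta>c \<eta>dc \<pi>c Dc[OF b] Ck2_facts(3)[OF f1 b b] Ck2_facts(3)[OF f2 b b] Ck2_facts(4)[OF V b] g\<psi>c
      by (intro continuous_intros) auto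
    then show ?thesis using G'b[OF b] by simp
  qed
  have Gs: "G b x = 0" if "norm x > r" for b x using \<psi>s[OF that] by (simp add: G_def)
  have ibp: "((\<lambda>x. G' b x b) has_integral 0) UNIV" if b: "b \<in> Basis" for b
    by (rule ibp_basis[OF Gd[OF b] G'c[OF b] Gs b r])
  define S where "S x = (\<Sum>b\<in>Basis. G' b x b)" for x
  have Sint: "(S has_integral 0) UNIV"
    using has_integral_sum[of Basis "\<lambda>b x. G' b x b" "\<lambda>b. 0" UNIV] ibp by (simp add: S_def[abs_def])
  have sum1: "grad V x \<bullet> Dv x = (\<Sum>b\<in>Basis. pdiff V b x * D b x)" for x
    by (subst euclidean_inner_sum) (simp add: grad_inner_Basis Dvb)
  have sum2: "g\<psi> x \<bullet> Dv x = (\<Sum>b\<in>Basis. (g\<psi> x \<bullet> b) * D b x)" for x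
    by (subst euclidean_inner_sum) (simp add: Dvb)
  have sum3: "Dv x \<bullet> Dv x = (\<Sum>b\<in>Basis. D b x * D b x)" for x
    by (subst euclidean_inner_sum) (simp add: Dvb)
  have Lid: "genL V f1 x - genL V f2 x = (\<Sum>b\<in>Basis. pdiff (pdiff f1 b) b x - pdiff (pdiff f2 b) b x) - grad V x \<bullet> Dv x" for x
    by (simp add: genL_def laplacian_def Dv_def inner_diff_right sum_subtractf)
  have Sid: "S x = \<psi> x * eta e (w x) * \<pi> x * (genL V f1 x - genL V f2 x)
      + eta e (w x) * \<pi> x * (g\<psi> x \<bullet> Dv x) + \<psi> x * etad e (w x) * \<pi> x * (Dv x \<bullet> Dv x)" for x
  proof -
    define A where "A = \<psi> x * eta e (w x) * \<pi> x"
    have "S x = (\<Sum>b\<in>Basis. A * (pdiff (pdiff f1 b) b x - pdiff (pdiff f2 b) b x) - A * (pdiff V b x * D b x)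
        + (\<psi> x * etad e (w x) * \<pi> x) * (D b x * D b x) + (eta e (w x) * \<pi> x) * ((g\<psi> x \<bullet> b) * D b x))"
      unfolding S_def by (rule sum.cong) (auto simp: G'b A_def algebra_simps)
    also have "\<dots> = A * (\<Sum>b\<in>Basis. pdiff (pdiff f1 b) b x - pdiff (pdiff f2 b) b x) - A * (\<Sum>b\<in>Basis. pdiff V b x * D b x)
        + (\<psi> x * etad e (w x) * \<pi> x) * (\<Sum>b\<in>Basis. D b x * D b x) + (eta e (w x) * \<pi> x) * (\<Sum>b\<in>Basis. (g\<psi> x \<bullet> b) * D b x)"
      by (simp add: sum.distrib sum_subtractf sum_distrib_left right_diff_distrib)
    finally show ?thesis by (simp add: Lid sum1 sum2 sum3 A_def algebra_simps)
  qed
  have g\<psi>0: "g\<psi> x = 0" if "norm x > r" for x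
  proof -
    have "(\<lambda>h. g\<psi> x \<bullet> h) = (\<lambda>_. 0)" by (rule deriv_zero_outside[OF \<psi>d \<psi>s that])
    then have "g\<psi> x \<bullet> g\<psi> x = 0" by metis
    then show ?thesis by simp
  qed
  define P where "P x = \<pi> x * norm (g\<psi> x) * norm (Dv x)" for x
  have Dvc: "continuous_on UNIV Dv"
    unfolding Dv_def[abs_def] using grad_cont[OF f1] grad_cont[OF f2] by (intro continuous_intros)
  have Pint: "P integrable_on UNIV"
    by (rule compact_support_integrable[of _ r]) (use \<pi>c g\<psi>c Dvc g\<psi>0 in \<open>auto simp: P_def intro!: continuous_intros\<close>)
  define I where "I x = eta e (f1 x - f2 x) * (\<psi> x * exp (- V x) * (genL V f1 x - genL V f2 x))" for x
  have Iint: "I integrable_on UNIV"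
    by (rule compact_support_integrable[of _ r])
       (use \<psi>c \<eta>c genL_cont[OF f1 V] genL_cont[OF f2 V] Ck2_facts(5)[OF V] \<psi>s in
         \<open>auto simp: I_def w_def[symmetric] intro!: continuous_intros\<close>)
  have le: "I x \<le> S x + P x" for x
  proof -
    have \<pi>p: "\<pi> x > 0" by (simp add: \<pi>_def)
    have "\<bar>g\<psi> x \<bullet> Dv x\<bar> \<le> norm (g\<psi> x) * norm (Dv x)" by (rule Cauchy_Schwarz_ineq2)
    moreover have "\<bar>eta e (w x)\<bar> \<le> 1" by (rule eta_bound[OF e])
    ultimately have "\<bar>eta e (w x) * (g\<psi> x \<bullet> Dv x)\<bar> \<le> norm (g\<psi> x) * norm (Dv x)"
      by (simp add: abs_mult mult_le_one mult_le_cancel_right1 order_trans[OF mult_right_mono] )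
    then have "- (eta e (w x) * \<pi> x * (g\<psi> x \<bullet> Dv x)) \<le> P x"
      using \<pi>p unfolding P_def
      by (metis (no_types, opaque_lifting) abs_le_D2 mult.assoc mult.commute mult_left_mono less_imp_le minus_mult_right)
    moreover have "0 \<le> \<psi> x * etad e (w x) * \<pi> x * (Dv x \<bullet> Dv x)"
      using \<psi>0[of x] etad_nonneg[OF e] \<pi>p by simp
    ultimately show ?thesis unfolding Sid I_def \<pi>_def w_def by simp
  qed
  have "integral UNIV I \<le> integral UNIV (\<lambda>x. S x + P x)"
    by (rule integral_le[OF Iint integrable_add[OF has_integral_integrable[OF Sint] Pint] le])
  also have "\<dots> = integral UNIV S + integral UNIV P"
    by (rule integral_add[OF has_integral_integrable[OF Sint] Pint])
  also have "\<dots> = integral UNIV P" using Sint integral_unique by simp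
  finally show ?thesis unfolding I_def P_def \<pi>_def Dv_def .
qed

lemma dct_sgn:
  fixes v F :: "'a::euclidean_space \<Rightarrow> real"
  assumes v: "continuous_on UNIV v" and F: "continuous_on UNIV F"
    and Fs: "\<And>x. norm x > r \<Longrightarrow> F x = 0"
  shows "(\<lambda>x. sgn (v x) * F x) integrable_on UNIV"
    "(\<lambda>n. integral UNIV (\<lambda>x. eta (ee n) (v x) * F x)) \<longlonglongrightarrow> integral UNIV (\<lambda>x. sgn (v x) * F x)"
proof -
  have ec: "continuous_on UNIV (\<lambda>x. eta (ee n) (v x))" for n
    by (rule continuous_on_compose2[OF eta_cont[OF ee_pos] v]) auto
  have fi: "(\<lambda>x. eta (ee n) (v x) * F x) integrable_on UNIV" for n
    by (rule compact_support_integrable[of _ r]) (use ec F Fs in \<open>auto intro!: continuous_intros\<close>)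
  have hi: "(\<lambda>x. \<bar>F x\<bar>) integrable_on UNIV"
    by (rule compact_support_integrable[of _ r]) (use F Fs in \<open>auto intro!: continuous_intros\<close>)
  have bd: "norm (eta (ee n) (v x) * F x) \<le> \<bar>F x\<bar>" for n x
    using eta_bound[OF ee_pos, of n "v x"] by (simp add: abs_mult mult_left_le_one_le)
  have cv: "(\<lambda>n. eta (ee n) (v x) * F x) \<longlonglongrightarrow> sgn (v x) * F x" for x
    by (intro tendsto_mult eta_lim tendsto_const)
  show "(\<lambda>x. sgn (v x) * F x) integrable_on UNIV"
    "(\<lambda>n. integral UNIV (\<lambda>x. eta (ee n) (v x) * F x)) \<longlonglongrightarrow> integral UNIV (\<lambda>x. sgn (v x) * F x)"
    using dominated_convergence[of "\<lambda>n x. eta (ee n) (v x) * F x" UNIV "\<lambda>x. \<bar>F x\<bar>" "\<lambda>x. sgn (v x) * F x"]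
      fi hi bd cv by auto
qed

lemma kato:
  fixes f1 f2 V \<psi> :: "'a::euclidean_space \<Rightarrow> real" and g\<psi> :: "'a \<Rightarrow> 'a"
  assumes f1: "Ck 2 f1" and f2: "Ck 2 f2" and V: "Ck 2 V"
    and \<psi>d: "\<And>x. (\<psi> has_derivative (\<lambda>h. g\<psi> x \<bullet> h)) (at x)"
    and g\<psi>c: "continuous_on UNIV g\<psi>"
    and \<psi>0: "\<And>x. \<psi> x \<ge> 0"
    and \<psi>s: "\<And>x. norm x > r \<Longrightarrow> \<psi> x = 0" and r: "r \<ge> 0"
  shows "integral UNIV (\<lambda>x. sgn (f1 x - f2 x) * (\<psi> x * exp (- V x) * (genL V f1 x - genL V f2 x)))
    \<le> integral UNIV (\<lambda>x. exp (- V x) * norm (g\<psi> x) * norm (grad f1 x - grad f2 x))"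
proof -
  have \<psi>c: "continuous_on UNIV \<psi>"
    using \<psi>d has_derivative_continuous continuous_at_imp_continuous_on by blast
  have vc: "continuous_on UNIV (\<lambda>x. f1 x - f2 x)"
    using Ck2_facts(5)[OF f1] Ck2_facts(5)[OF f2] by (intro continuous_intros)
  have Fc: "continuous_on UNIV (\<lambda>x. \<psi> x * exp (- V x) * (genL V f1 x - genL V f2 x))"
    using \<psi>c genL_cont[OF f1 V] genL_cont[OF f2 V] Ck2_facts(5)[OF V] by (intro continuous_intros)
  have Fs: "\<psi> x * exp (- V x) * (genL V f1 x - genL V f2 x) = 0" if "norm x > r" for x
    using \<psi>s[OF that] by simp
  note L = dct_sgn(2)[OF vc Fc Fs]
  show ?thesis
    by (rule LIMSEQ_le_const2[OF L]) (use kato_smooth[OF f1 f2 V \<psi>d g\<psi>c \<psi>0 \<psi>s r ee_pos] in auto)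
qed

lemma smooth_Ck2: "smooth V \<Longrightarrow> Ck 2 V" by (simp add: smooth_def)

lemma cp_unfold: "(\<lambda>(t, x). g t x) = (\<lambda>p. g (fst p) (snd p))"
  by (simp add: case_prod_unfold)

lemma cs_nonneg: "classical_solution V \<beta> T \<mu> \<Longrightarrow> t \<in> {0..T} \<Longrightarrow> \<mu> t x \<ge> 0"
  by (simp add: classical_solution_def)

lemma cs_cont: "classical_solution V \<beta> T \<mu> \<Longrightarrow> continuous_on ({0..T} \<times> UNIV) (\<lambda>p. \<mu> (fst p) (snd p))"
  by (simp add: classical_solution_def cp_unfold)

lemma cs_Ck: "classical_solution V \<beta> T \<mu> \<Longrightarrow> t \<in> {0..T} \<Longrightarrow> Ck 2 (\<lambda>y. \<mu> t y powr (\<beta> + 1))"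
  by (simp add: classical_solution_def)

lemma cs_deriv: "classical_solution V \<beta> T \<mu> \<Longrightarrow> t \<in> {0..T} \<Longrightarrow>
   ((\<lambda>s. \<mu> s x) has_real_derivative genL V (\<lambda>y. \<mu> t y powr (\<beta> + 1)) x) (at t within {0..T})"
  by (simp add: classical_solution_def)

lemma cs_pdiff_cont: "classical_solution V \<beta> T \<mu> \<Longrightarrow> b \<in> Basis \<Longrightarrow>
   continuous_on ({0..T} \<times> UNIV) (\<lambda>p. pdiff (\<lambda>y. \<mu> (fst p) y powr (\<beta> + 1)) b (snd p))"
  by (simp add: classical_solution_def cp_unfold)

lemma cs_pdiff2_cont: "classical_solution V \<beta> T \<mu> \<Longrightarrow> b \<in> Basis \<Longrightarrow> c \<in> Basis \<Longrightarrow>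
   continuous_on ({0..T} \<times> UNIV) (\<lambda>p. pdiff (pdiff (\<lambda>y. \<mu> (fst p) y powr (\<beta> + 1)) b) c (snd p))"
  by (simp add: classical_solution_def cp_unfold)

lemma cs_grad_cont: "classical_solution V \<beta> T \<mu> \<Longrightarrow>
   continuous_on ({0..T} \<times> UNIV) (\<lambda>p. grad (\<lambda>y. \<mu> (fst p) y powr (\<beta> + 1)) (snd p))"
  unfolding grad_def using cs_pdiff_cont[of V \<beta> T \<mu>]
  by (intro continuous_intros) auto

lemma snd_cont: "continuous_on UNIV f \<Longrightarrow> continuous_on S (\<lambda>p. f (snd p))"
  by (rule continuous_on_compose2[OF _ continuous_on_snd]) auto

lemma cs_genL_cont: "classical_solution V \<beta> T \<mu> \<Longrightarrow> smooth V \<Longrightarrow>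
   continuous_on ({0..T} \<times> UNIV) (\<lambda>p. genL V (\<lambda>y. \<mu> (fst p) y powr (\<beta> + 1)) (snd p))"
  unfolding genL_def laplacian_def
  using cs_pdiff2_cont[of V \<beta> T \<mu>] cs_grad_cont[of V \<beta> T \<mu>] snd_cont[OF grad_cont[OF smooth_Ck2]]
  by (intro continuous_intros) auto

lemma sgn_powr:
  fixes a b m :: real
  assumes "a \<ge> 0" "b \<ge> 0" "m > 0"
  shows "sgn (a - b) = sgn (a powr m - b powr m)"
proof -
  have "a < b \<Longrightarrow> a powr m < b powr m" using assms powr_less_mono2[of m a b] by blast
  moreover have "b < a \<Longrightarrow> b powr m < a powr m" using assms powr_less_mono2[of m b a] by blast
  ultimately show ?thesis by (cases a b rule: linorder_cases) auto
qed

lemma cont_int_cbox: "continuous_on UNIV f \<Longrightarrow> (f::'a::euclidean_space \<Rightarrow> real) integrable_on cbox a b"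
  by (rule integrable_continuous) (rule continuous_on_subset, auto)

lemma time_identity:
  fixes V :: "'a::euclidean_space \<Rightarrow> real" and \<beta> T R s t :: real and \<mu>1 \<mu>2 :: "real \<Rightarrow> 'a \<Rightarrow> real"
  assumes V: "smooth V" and s1: "classical_solution V \<beta> T \<mu>1" and s2: "classical_solution V \<beta> T \<mu>2"
    and R: "R > 0" and st: "0 \<le> s" "s \<le> t" "t \<le> T"
  defines "u \<equiv> \<lambda>\<tau> x. \<mu>1 \<tau> x - \<mu>2 \<tau> x"
    and "Lw \<equiv> \<lambda>\<tau> x. genL V (\<lambda>y. \<mu>1 \<tau> y powr (\<beta> + 1)) x - genL V (\<lambda>y. \<mu>2 \<tau> y powr (\<beta> + 1)) x"
    and "I \<equiv> \<lambda>\<tau>. integral UNIV (\<lambda>x. sgn (\<mu>1 \<tau> x - \<mu>2 \<tau> x) * (psi R x * exp (- V x) *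
        (genL V (\<lambda>y. \<mu>1 \<tau> y powr (\<beta> + 1)) x - genL V (\<lambda>y. \<mu>2 \<tau> y powr (\<beta> + 1)) x)))"
  shows "I integrable_on {s..t}" "I absolutely_integrable_on {s..t}"
    "integral UNIV (\<lambda>x. psi R x * exp (- V x) * \<bar>u t x\<bar>) - integral UNIV (\<lambda>x. psi R x * exp (- V x) * \<bar>u s x\<bar>)
       = integral {s..t} I"
proof -
  define \<pi> where "\<pi> x = exp (- V x)" for x
  define a :: 'a where "a = -(R *\<^sub>R One)"
  define b :: 'a where "b = R *\<^sub>R One"
  have B: "bx R = cbox a b" by (simp add: bx_def a_def b_def)
  have sub: "{s..t} \<subseteq> {0..T}" using st by auto
  have Uc: "continuous_on ({0..T} \<times> UNIV) (\<lambda>p. u (fst p) (snd p))"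
    unfolding u_def using cs_cont[OF s1] cs_cont[OF s2] by (intro continuous_intros)
  have Lc: "continuous_on ({0..T} \<times> UNIV) (\<lambda>p. Lw (fst p) (snd p))"
    unfolding Lw_def using cs_genL_cont[OF s1 V] cs_genL_cont[OF s2 V] by (intro continuous_intros)
  have \<pi>c: "continuous_on UNIV \<pi>"
    unfolding \<pi>_def[abs_def] using Ck2_facts(5)[OF smooth_Ck2[OF V]] by (intro continuous_intros)
  have \<pi>p: "\<pi> x > 0" for x by (simp add: \<pi>_def)
  have Pc: "continuous_on S (\<lambda>p. psi R (snd p) * \<pi> (snd p))" for S :: "(real \<times> 'a) set"
    using snd_cont[OF psi_cont] snd_cont[OF \<pi>c] by (intro continuous_intros)
  have slice: "continuous_on UNIV (\<lambda>x. f (\<tau>, x))" if "continuous_on ({0..T} \<times> UNIV) f" "\<tau> \<in> {0..T}" for f :: "real \<times> 'a \<Rightarrow> real" and \<tau>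
    by (rule continuous_on_compose2[OF that(1)]) (use that(2) in \<open>auto intro!: continuous_intros\<close>)
  have uc: "continuous_on UNIV (u \<tau>)" if "\<tau> \<in> {0..T}" for \<tau>
    using slice[OF Uc that] by simp
  have Lwc: "continuous_on UNIV (Lw \<tau>)" if "\<tau> \<in> {0..T}" for \<tau>
    using slice[OF Lc that] by simp
  have psupp: "psi R x = 0" if "norm x > R" for x using psi_supp[OF R that] .
  define Hn where "Hn n \<tau> x = psi R x * \<pi> x * (eta (ee n) (u \<tau> x) * Lw \<tau> x)" for n \<tau> x
  have Hc: "continuous_on ({s..t} \<times> cbox a b) (\<lambda>p. Hn n (fst p) (snd p))" for n
  proof -
    have e: "continuous_on ({0..T} \<times> UNIV) (\<lambda>p. eta (ee n) (u (fst p) (snd p)))"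
      by (rule continuous_on_compose2[OF eta_cont[OF ee_pos] Uc]) auto
    have "continuous_on ({0..T} \<times> UNIV) (\<lambda>p. Hn n (fst p) (snd p))"
      unfolding Hn_def using snd_cont[OF psi_cont] snd_cont[OF \<pi>c] e Lc by (intro continuous_intros)
    then show ?thesis by (rule continuous_on_subset) (use sub in auto)
  qed
  have I_eq: "I \<tau> = integral UNIV (\<lambda>x. sgn (u \<tau> x) * (psi R x * \<pi> x * Lw \<tau> x))" for \<tau>
    by (simp add: I_def u_def Lw_def \<pi>_def)
  have ftc: "((\<lambda>\<tau>. Hn n \<tau> x) has_integral (psi R x * \<pi> x * (Phi (ee n) (u t x) - Phi (ee n) (u s x)))) {s..t}" for n x
  proof -
    have d: "((\<lambda>\<tau>. psi R x * \<pi> x * Phi (ee n) (u \<tau> x)) has_vector_derivative Hn n \<tau> x) (at \<tau> within {s..t})"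
      if "\<tau> \<in> {s..t}" for \<tau>
    proof -
      have \<tau>: "\<tau> \<in> {0..T}" using that sub by auto
      have "((\<lambda>\<tau>. u \<tau> x) has_real_derivative Lw \<tau> x) (at \<tau> within {0..T})"
        unfolding u_def Lw_def by (intro DERIV_diff cs_deriv[OF s1 \<tau>] cs_deriv[OF s2 \<tau>])
      then have "((\<lambda>\<tau>. u \<tau> x) has_real_derivative Lw \<tau> x) (at \<tau> within {s..t})"
        by (rule DERIV_subset) (rule sub)
      from DERIV_cmult[OF DERIV_chain2[OF Phi_deriv[OF ee_pos] this], of "psi R x * \<pi> x"]
      show ?thesis unfolding has_real_derivative_iff_has_vector_derivative Hn_def by (simp add: mult.assoc)
    qed
    from fundamental_theorem_of_calculus[OF st(2) d]
    show ?thesis by (simp add: algebra_simps)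
  qed
  define In where "In n \<tau> = integral (cbox a b) (Hn n \<tau>)" for n \<tau>
  have swap: "integral (cbox a b) (\<lambda>x. psi R x * \<pi> x * (Phi (ee n) (u t x) - Phi (ee n) (u s x)))
      = integral {s..t} (In n)" for n
  proof -
    have "integral (cbox s t) (\<lambda>\<tau>. integral (cbox a b) (Hn n \<tau>)) = integral (cbox a b) (\<lambda>x. integral (cbox s t) (\<lambda>\<tau>. Hn n \<tau> x))"
      by (rule integral_swap_continuous) (use Hc[of n] in \<open>simp add: cbox_Pair_eq cp_unfold\<close>)
    moreover have "integral (cbox s t) (\<lambda>\<tau>. Hn n \<tau> x) = psi R x * \<pi> x * (Phi (ee n) (u t x) - Phi (ee n) (u s x))" for x
      using ftc[of n x] integral_unique by (simp add: cbox_interval)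
    ultimately show ?thesis unfolding In_def[abs_def] by (simp add: cbox_interval)
  qed
  have t0: "t \<in> {0..T}" and s0: "s \<in> {0..T}" using st by auto
  have Lim1: "(\<lambda>n. integral (cbox a b) (\<lambda>x. psi R x * \<pi> x * (Phi (ee n) (u t x) - Phi (ee n) (u s x))))
     \<longlonglongrightarrow> integral (cbox a b) (\<lambda>x. psi R x * \<pi> x * (\<bar>u t x\<bar> - \<bar>u s x\<bar>))"
  proof (rule dominated_convergence(2))
    fix n
    have "continuous_on UNIV (\<lambda>x. Phi (ee n) (u t x))" "continuous_on UNIV (\<lambda>x. Phi (ee n) (u s x))"
      by (rule continuous_on_compose2[OF Phi_cont uc]; use t0 s0 in auto)+
    then show "(\<lambda>x. psi R x * \<pi> x * (Phi (ee n) (u t x) - Phi (ee n) (u s x))) integrable_on cbox a b"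
      using psi_cont \<pi>c by (intro cont_int_cbox) (auto intro!: continuous_intros)
  next
    show "(\<lambda>x. psi R x * \<pi> x * (\<bar>u t x\<bar> + \<bar>u s x\<bar> + 2)) integrable_on cbox a b"
      using psi_cont \<pi>c uc[OF t0] uc[OF s0]
      by (intro cont_int_cbox) (auto intro!: continuous_intros)
  next
    fix n x
    have p: "0 \<le> psi R x * \<pi> x" using psi_nonneg[of R x] \<pi>p[of x] by simp
    have "\<bar>Phi (ee n) (u t x) - Phi (ee n) (u s x)\<bar> \<le> \<bar>u t x\<bar> + \<bar>u s x\<bar> + 2"
      using Phi_bound[OF ee_pos ee_le1, of n "u t x"] Phi_bound[OF ee_pos ee_le1, of n "u s x"] by linarith
    note mult_left_mono[OF this p]
    moreover have "norm (psi R x * \<pi> x * (Phi (ee n) (u t x) - Phi (ee n) (u s x))) = (psi R x * \<pi> x) * \<bar>Phi (ee n) (u t x) - Phi (ee n) (u s x)\<bar>"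
      by (simp only: real_norm_def abs_mult[of "psi R x * \<pi> x"] abs_of_nonneg[OF p])
    ultimately show "norm (psi R x * \<pi> x * (Phi (ee n) (u t x) - Phi (ee n) (u s x))) \<le> psi R x * \<pi> x * (\<bar>u t x\<bar> + \<bar>u s x\<bar> + 2)"
      by simp
  next
    fix x
    show "(\<lambda>n. psi R x * \<pi> x * (Phi (ee n) (u t x) - Phi (ee n) (u s x))) \<longlonglongrightarrow> psi R x * \<pi> x * (\<bar>u t x\<bar> - \<bar>u s x\<bar>)"
      by (intro tendsto_intros Phi_lim)
  qed
  have Hnc: "continuous_on UNIV (Hn n \<tau>)" if "\<tau> \<in> {0..T}" for n \<tau>
  proof -
    have "continuous_on UNIV (\<lambda>x. eta (ee n) (u \<tau> x))"
      by (rule continuous_on_compose2[OF eta_cont[OF ee_pos] uc[OF that]]) auto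
    then show ?thesis unfolding Hn_def[abs_def] using psi_cont \<pi>c Lwc[OF that] by (intro continuous_intros)
  qed
  have Fc: "continuous_on UNIV (\<lambda>x. psi R x * \<pi> x * Lw \<tau> x)" if "\<tau> \<in> {0..T}" for \<tau>
    using psi_cont \<pi>c Lwc[OF that] by (intro continuous_intros)
  have In_eq: "In n \<tau> = integral UNIV (\<lambda>x. eta (ee n) (u \<tau> x) * (psi R x * \<pi> x * Lw \<tau> x))" for n \<tau>
  proof -
    have "integral UNIV (Hn n \<tau>) = integral (bx R) (Hn n \<tau>)"
      by (rule integral_bx[where r=R]) (auto simp: Hn_def psupp)
    then show ?thesis by (simp add: In_def B Hn_def[abs_def] algebra_simps)
  qed
  have conv2: "(\<lambda>n. In n \<tau>) \<longlonglongrightarrow> I \<tau>" if "\<tau> \<in> {s..t}" for \<tau>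
  proof -
    have \<tau>: "\<tau> \<in> {0..T}" using that sub by auto
    show ?thesis unfolding In_eq I_eq
      by (rule dct_sgn(2)[OF uc[OF \<tau>] Fc[OF \<tau>], where r=R]) (simp add: psupp)
  qed
  have Inc: "continuous_on {s..t} (In n)" for n
    unfolding In_def[abs_def] by (rule integral_continuous_on_param) (use Hc[of n] in \<open>simp add: cp_unfold\<close>)
  define hB where "hB \<tau> = integral (cbox a b) (\<lambda>x. \<bar>psi R x * \<pi> x * Lw \<tau> x\<bar>)" for \<tau>
  have hBc: "continuous_on {s..t} hB"
  proof -
    have "continuous_on ({0..T} \<times> UNIV) (\<lambda>p. \<bar>psi R (snd p) * \<pi> (snd p) * Lw (fst p) (snd p)\<bar>)"
      using snd_cont[OF psi_cont] snd_cont[OF \<pi>c] Lc by (intro continuous_intros)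
    then have "continuous_on ({s..t} \<times> cbox a b) (\<lambda>p. \<bar>psi R (snd p) * \<pi> (snd p) * Lw (fst p) (snd p)\<bar>)"
      by (rule continuous_on_subset) (use sub in auto)
    then show ?thesis
      unfolding hB_def[abs_def] by (intro integral_continuous_on_param) (simp add: cp_unfold)
  qed
  have Lim2: "I integrable_on {s..t}" "(\<lambda>n. integral {s..t} (In n)) \<longlonglongrightarrow> integral {s..t} I" "I absolutely_integrable_on {s..t}"
  proof -
    have bd: "norm (In n \<tau>) \<le> hB \<tau>" if "\<tau> \<in> {s..t}" for n \<tau>
    proof -
      have \<tau>: "\<tau> \<in> {0..T}" using that sub by auto
      show ?thesis unfolding In_def hB_def
      proof (rule Henstock_Kurzweil_Integration.integral_norm_bound_integral)
        show "Hn n \<tau> integrable_on cbox a b"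
          by (rule cont_int_cbox[OF Hnc[OF \<tau>]])
        show "(\<lambda>x. \<bar>psi R x * \<pi> x * Lw \<tau> x\<bar>) integrable_on cbox a b"
          using Fc[OF \<tau>] by (intro cont_int_cbox) (auto intro!: continuous_intros)
        fix x
        have "\<bar>eta (ee n) (u \<tau> x)\<bar> * \<bar>Lw \<tau> x\<bar> \<le> \<bar>Lw \<tau> x\<bar>"
          by (rule mult_left_le_one_le) (use eta_bound[OF ee_pos, of n "u \<tau> x"] in auto)
        then have "\<bar>psi R x\<bar> * (\<bar>\<pi> x\<bar> * (\<bar>eta (ee n) (u \<tau> x)\<bar> * \<bar>Lw \<tau> x\<bar>)) \<le> \<bar>psi R x\<bar> * (\<bar>\<pi> x\<bar> * \<bar>Lw \<tau> x\<bar>)"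
          by (intro mult_left_mono) auto
        then show "norm (Hn n \<tau> x) \<le> \<bar>psi R x * \<pi> x * Lw \<tau> x\<bar>"
          by (simp add: Hn_def abs_mult mult.assoc)
      qed
    qed
    show I1: "I integrable_on {s..t}" "(\<lambda>n. integral {s..t} (In n)) \<longlonglongrightarrow> integral {s..t} I"
      using dominated_convergence[of In "{s..t}" hB I] integrable_continuous_interval[OF Inc]
        integrable_continuous_interval[OF hBc] bd conv2 by auto
    have "norm (I \<tau>) \<le> hB \<tau>" if "\<tau> \<in> {s..t}" for \<tau>
      by (rule LIMSEQ_le_const2[OF tendsto_norm[OF conv2[OF that]]]) (use bd that in auto)
    then show "I absolutely_integrable_on {s..t}"
      by (rule absolutely_integrable_integrable_bound) (use I1 integrable_continuous_interval[OF hBc] in auto)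
  qed
  show "I integrable_on {s..t}" by (rule Lim2(1))
  show "I absolutely_integrable_on {s..t}" by (rule Lim2(3))
  have eq: "integral (cbox a b) (\<lambda>x. psi R x * \<pi> x * (\<bar>u t x\<bar> - \<bar>u s x\<bar>)) = integral {s..t} I"
    using LIMSEQ_unique[OF Lim1[unfolded swap] Lim2(2)] .
  have int_abs: "integral UNIV (\<lambda>x. psi R x * exp (- V x) * \<bar>u \<tau> x\<bar>) = integral (cbox a b) (\<lambda>x. psi R x * \<pi> x * \<bar>u \<tau> x\<bar>)" for \<tau>
    unfolding B[symmetric] \<pi>_def by (rule integral_bx[where r=R]) (auto simp: psupp)
  have iabs: "(\<lambda>x. psi R x * \<pi> x * \<bar>u \<tau> x\<bar>) integrable_on cbox a b" if "\<tau> \<in> {0..T}" for \<tau>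
    using psi_cont \<pi>c uc[OF that] by (intro cont_int_cbox) (auto intro!: continuous_intros)
  have "integral (cbox a b) (\<lambda>x. psi R x * \<pi> x * (\<bar>u t x\<bar> - \<bar>u s x\<bar>))
      = integral (cbox a b) (\<lambda>x. psi R x * \<pi> x * \<bar>u t x\<bar> - psi R x * \<pi> x * \<bar>u s x\<bar>)"
    by (simp add: algebra_simps)
  also have "\<dots> = integral (cbox a b) (\<lambda>x. psi R x * \<pi> x * \<bar>u t x\<bar>) - integral (cbox a b) (\<lambda>x. psi R x * \<pi> x * \<bar>u s x\<bar>)"
    by (rule integral_diff[OF iabs[OF t0] iabs[OF s0]])
  finally show "integral UNIV (\<lambda>x. psi R x * exp (- V x) * \<bar>u t x\<bar>) - integral UNIV (\<lambda>x. psi R x * exp (- V x) * \<bar>u s x\<bar>)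
       = integral {s..t} I" using eq int_abs by simp
qed

lemma meas_a:
  assumes s: "classical_solution V \<beta> T \<mu>" and V: "smooth V"
  shows "(\<lambda>\<tau>. (\<integral>\<^sup>+ x. ennreal ((norm (grad (\<lambda>y. \<mu> \<tau> y powr (\<beta> + 1)) x))\<^sup>2 * exp (- V x)) \<partial>lborel)
     * indicator {0..T} \<tau>) \<in> borel_measurable lborel"
proof -
  define F where "F p = (norm (grad (\<lambda>y. \<mu> (fst p) y powr (\<beta> + 1)) (snd p)))\<^sup>2 * exp (- V (snd p))" for p
  have Fc: "continuous_on ({0..T} \<times> UNIV) F"
    unfolding F_def using cs_grad_cont[OF s] snd_cont[OF Ck2_facts(5)[OF smooth_Ck2[OF V]]]
    by (intro continuous_intros)
  have "(\<lambda>p. indicator ({0..T} \<times> UNIV) p *\<^sub>R F p) \<in> borel_measurable borel"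
    by (rule borel_measurable_continuous_on_indicator[OF _ Fc]) (auto intro!: borel_closed closed_Times)
  then have "(\<lambda>p. ennreal (indicator ({0..T} \<times> UNIV) p * F p)) \<in> borel_measurable (lborel \<Otimes>\<^sub>M lborel)"
    unfolding lborel_prod by (simp add: measurable_lborel1)
  then have "(\<lambda>\<tau>. \<integral>\<^sup>+ x. ennreal (indicator ({0..T} \<times> UNIV) (\<tau>, x) * F (\<tau>, x)) \<partial>lborel) \<in> borel_measurable lborel"
    by (intro lborel.borel_measurable_nn_integral) (simp add: case_prod_unfold)
  moreover have "(\<integral>\<^sup>+ x. ennreal (indicator ({0..T} \<times> UNIV) (\<tau>, x) * F (\<tau>, x)) \<partial>lborel)
     = (\<integral>\<^sup>+ x. ennreal ((norm (grad (\<lambda>y. \<mu> \<tau> y powr (\<beta> + 1)) x))\<^sup>2 * exp (- V x)) \<partial>lborel) * indicator {0..T} \<tau>" for \<tau>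
    by (cases "\<tau> \<in> {0..T}") (auto simp: F_def indicator_def)
  ultimately show ?thesis by simp
qed

lemma gpsi_supp: "R > 0 \<Longrightarrow> norm x > R \<Longrightarrow> gpsi R x = 0"
  using gpsi_bound[of R x] psi_supp[of R x]
  by (metis deriv_zero_outside[OF psi_deriv] inner_eq_zero_iff psi_supp)

lemma ennreal_add_le: "(a::real) \<ge> 0 \<Longrightarrow> ennreal (a + b) \<le> ennreal a + ennreal b"
  by (cases "b \<ge> 0") (auto simp: ennreal_plus intro: order_trans[OF ennreal_leI[of "a + b" a]] add_increasing2)

lemma le_1_sq: "(x::real) \<le> 1 + x^2"
proof -
  have "0 \<le> (x - 1/2)^2" by simp
  then show ?thesis by (simp add: power2_eq_square algebra_simps)
qed

lemma sum_sq_le: "((a::real) + b)^2 \<le> 2*a^2 + 2*b^2"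
proof -
  have "0 \<le> (a - b)^2" by simp
  then show ?thesis by (simp add: power2_eq_square algebra_simps)
qed

lemma cont_meas: "continuous_on UNIV (f::'a::euclidean_space \<Rightarrow> real) \<Longrightarrow> (\<lambda>x. ennreal (f x)) \<in> borel_measurable lborel"
  by (metis borel_measurable_continuous_onI continuous_on_ennreal measurable_lborel2)

lemma ennreal_comb: "(a::real) \<ge> 0 \<Longrightarrow> b \<ge> 0 \<Longrightarrow> c \<ge> 0 \<Longrightarrow> d \<ge> 0 \<Longrightarrow>
  ennreal (a * (b + 2 * c + 2 * d)) = ennreal a * (ennreal b + 2 * ennreal c + 2 * ennreal d)"
  using ennreal_mult by simp

lemma g_bound:
  fixes V f1 f2 :: "'a::euclidean_space \<Rightarrow> real"
  assumes V: "smooth V" and f1: "Ck 2 f1" and f2: "Ck 2 f2"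
    and \<pi>1: "(\<integral>\<^sup>+ x. ennreal (exp (- V x)) \<partial>lborel) = 1" and R: "R > 0"
  shows "ennreal (integral UNIV (\<lambda>x. exp (- V x) * norm (gpsi R x) * norm (grad f1 x - grad f2 x)))
   \<le> ennreal (4/R) * (1 + 2 * (\<integral>\<^sup>+ x. ennreal ((norm (grad f1 x))\<^sup>2 * exp (- V x)) \<partial>lborel)
         + 2 * (\<integral>\<^sup>+ x. ennreal ((norm (grad f2 x))\<^sup>2 * exp (- V x)) \<partial>lborel))"
proof -
  define P where "P x = exp (- V x) * norm (gpsi R x) * norm (grad f1 x - grad f2 x)" for x
  define A where "A x = (norm (grad f1 x))\<^sup>2 * exp (- V x)" for x
  define B where "B x = (norm (grad f2 x))\<^sup>2 * exp (- V x)" for x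
  define \<pi> where "\<pi> x = exp (- V x)" for x
  have \<pi>c: "continuous_on UNIV \<pi>"
    unfolding \<pi>_def[abs_def] using Ck2_facts(5)[OF smooth_Ck2[OF V]] by (intro continuous_intros)
  have Pc: "continuous_on UNIV P"
    unfolding P_def using Ck2_facts(5)[OF smooth_Ck2[OF V]] gpsi_cont grad_cont[OF f1] grad_cont[OF f2]
    by (intro continuous_intros)
  have Pint: "P integrable_on UNIV"
    by (rule compact_support_integrable[OF Pc, of R]) (simp add: P_def gpsi_supp[OF R])
  have Pnn: "0 \<le> P x" for x by (simp add: P_def)
  have eq: "(\<integral>\<^sup>+ x. ennreal (P x) \<partial>lborel) = ennreal (integral UNIV P)"
    using nn_integral_has_integral_lebesgue[of UNIV P "integral UNIV P"] Pint Pnn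
    by (simp add: integrable_integral)
  have pt: "ennreal (P x) \<le> ennreal (4/R) * (ennreal (\<pi> x) + 2 * ennreal (A x) + 2 * ennreal (B x))" for x
  proof -
    define d where "d = norm (grad f1 x - grad f2 x)"
    define n1 where "n1 = norm (grad f1 x)"
    define n2 where "n2 = norm (grad f2 x)"
    have "d \<le> n1 + n2" unfolding d_def n1_def n2_def by (rule norm_triangle_ineq4)
    also have "\<dots> \<le> 1 + (n1 + n2)^2" by (rule le_1_sq)
    also have "\<dots> \<le> 1 + 2 * n1^2 + 2 * n2^2" using sum_sq_le[of n1 n2] by simp
    finally have d: "d \<le> 1 + 2 * n1^2 + 2 * n2^2" .
    have "P x = \<pi> x * (norm (gpsi R x) * d)" by (simp add: P_def \<pi>_def d_def)
    also have "\<dots> \<le> \<pi> x * (4 / R * (1 + 2 * n1^2 + 2 * n2^2))"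
      using R by (intro mult_left_mono mult_mono gpsi_bound R d) (auto simp: \<pi>_def d_def)
    also have "\<dots> = 4 / R * (\<pi> x + 2 * A x + 2 * B x)"
      by (simp add: A_def B_def n1_def n2_def \<pi>_def algebra_simps)
    finally have "ennreal (P x) \<le> ennreal (4 / R * (\<pi> x + 2 * A x + 2 * B x))" by (rule ennreal_leI)
    also have "\<dots> = ennreal (4/R) * (ennreal (\<pi> x) + 2 * ennreal (A x) + 2 * ennreal (B x))"
      using R by (intro ennreal_comb) (auto simp: A_def B_def \<pi>_def)
    finally show ?thesis .
  qed
  have mA: "(\<lambda>x. ennreal (A x)) \<in> borel_measurable lborel"
    unfolding A_def using grad_cont[OF f1] Ck2_facts(5)[OF smooth_Ck2[OF V]] by (intro cont_meas continuous_intros)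
  have mB: "(\<lambda>x. ennreal (B x)) \<in> borel_measurable lborel"
    unfolding B_def using grad_cont[OF f2] Ck2_facts(5)[OF smooth_Ck2[OF V]] by (intro cont_meas continuous_intros)
  have m\<pi>: "(\<lambda>x. ennreal (\<pi> x)) \<in> borel_measurable lborel" by (rule cont_meas[OF \<pi>c])
  have "ennreal (integral UNIV P) \<le> (\<integral>\<^sup>+ x. ennreal (4/R) * (ennreal (\<pi> x) + 2 * ennreal (A x) + 2 * ennreal (B x)) \<partial>lborel)"
    unfolding eq[symmetric] by (rule nn_integral_mono) (rule pt)
  also have "\<dots> = ennreal (4/R) * ((\<integral>\<^sup>+ x. ennreal (\<pi> x) \<partial>lborel) + 2 * (\<integral>\<^sup>+ x. ennreal (A x) \<partial>lborel) + 2 * (\<integral>\<^sup>+ x. ennreal (B x) \<partial>lborel))"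
    using mA mB m\<pi> by (simp add: nn_integral_cmult nn_integral_add)
  finally show ?thesis using \<pi>1 unfolding P_def A_def B_def \<pi>_def by simp
qed

lemma nn_has_integral_UNIV_test: "(f has_integral I) UNIV \<Longrightarrow> (\<And>x. 0 \<le> f x) \<Longrightarrow> integral\<^sup>N lborel (\<lambda>x. indicator UNIV x * f x) = I"
  using nn_integral_has_integral_lebesgue[of UNIV f I] by simp

lemma main_R:
  fixes V :: "'a::euclidean_space \<Rightarrow> real" and \<beta> T R s t :: real and \<mu>1 \<mu>2 :: "real \<Rightarrow> 'a \<Rightarrow> real"
  assumes \<beta>: "\<beta> > 0" and V: "smooth V"
    and \<pi>1: "(\<integral>\<^sup>+ x. ennreal (exp (- V x)) \<partial>lborel) = 1"
    and s1: "classical_solution V \<beta> T \<mu>1" and s2: "classical_solution V \<beta> T \<mu>2"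
    and R: "R > 0" and st: "0 \<le> s" "s \<le> t" "t \<le> T"
  shows "ennreal (integral UNIV (\<lambda>x. psi R x * exp (- V x) * \<bar>\<mu>1 t x - \<mu>2 t x\<bar>))
    \<le> ennreal (integral UNIV (\<lambda>x. psi R x * exp (- V x) * \<bar>\<mu>1 s x - \<mu>2 s x\<bar>))
      + ennreal (4/R) * (ennreal T
        + 2 * (\<integral>\<^sup>+ t\<in>{0..T}. (\<integral>\<^sup>+ x. ennreal ((norm (grad (\<lambda>y. \<mu>1 t y powr (\<beta> + 1)) x))\<^sup>2
            * exp (- V x)) \<partial>lborel) \<partial>lborel)
        + 2 * (\<integral>\<^sup>+ t\<in>{0..T}. (\<integral>\<^sup>+ x. ennreal ((norm (grad (\<lambda>y. \<mu>2 t y powr (\<beta> + 1)) x))\<^sup>2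
            * exp (- V x)) \<partial>lborel) \<partial>lborel))"
proof -
  define I where "I = (\<lambda>\<tau>. integral UNIV (\<lambda>x. sgn (\<mu>1 \<tau> x - \<mu>2 \<tau> x) * (psi R x * exp (- V x) *
        (genL V (\<lambda>y. \<mu>1 \<tau> y powr (\<beta> + 1)) x - genL V (\<lambda>y. \<mu>2 \<tau> y powr (\<beta> + 1)) x))))"
  have TI: "I integrable_on {s..t}" "I absolutely_integrable_on {s..t}"
    "integral UNIV (\<lambda>x. psi R x * exp (- V x) * \<bar>\<mu>1 t x - \<mu>2 t x\<bar>) - integral UNIV (\<lambda>x. psi R x * exp (- V x) * \<bar>\<mu>1 s x - \<mu>2 s x\<bar>)
       = integral {s..t} I"
    using time_identity[OF V s1 s2 R st] unfolding I_def by simp_all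
  define a1 where "a1 \<tau> = (\<integral>\<^sup>+ x. ennreal ((norm (grad (\<lambda>y. \<mu>1 \<tau> y powr (\<beta> + 1)) x))\<^sup>2 * exp (- V x)) \<partial>lborel)" for \<tau>
  define a2 where "a2 \<tau> = (\<integral>\<^sup>+ x. ennreal ((norm (grad (\<lambda>y. \<mu>2 \<tau> y powr (\<beta> + 1)) x))\<^sup>2 * exp (- V x)) \<partial>lborel)" for \<tau>
  define g where "g \<tau> = integral UNIV (\<lambda>x. exp (- V x) * norm (gpsi R x) *
      norm (grad (\<lambda>y. \<mu>1 \<tau> y powr (\<beta> + 1)) x - grad (\<lambda>y. \<mu>2 \<tau> y powr (\<beta> + 1)) x))" for \<tau>
  have Ig: "I \<tau> \<le> g \<tau>" if "\<tau> \<in> {0..T}" for \<tau>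
  proof -
    have "I \<tau> = integral UNIV (\<lambda>x. sgn (\<mu>1 \<tau> x powr (\<beta> + 1) - \<mu>2 \<tau> x powr (\<beta> + 1)) * (psi R x * exp (- V x) *
        (genL V (\<lambda>y. \<mu>1 \<tau> y powr (\<beta> + 1)) x - genL V (\<lambda>y. \<mu>2 \<tau> y powr (\<beta> + 1)) x)))"
      unfolding I_def
      by (intro integral_cong arg_cong2[where f="(*)"] sgn_powr cs_nonneg[OF s1 that] cs_nonneg[OF s2 that] refl) (use \<beta> in simp)
    also have "\<dots> \<le> g \<tau>"
      unfolding g_def
      by (rule kato[OF cs_Ck[OF s1 that] cs_Ck[OF s2 that] smooth_Ck2[OF V] psi_deriv gpsi_cont psi_nonneg psi_supp[OF R]])
         (use R in auto)
    finally show ?thesis .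
  qed
  have gb: "ennreal (g \<tau>) \<le> ennreal (4/R) * (1 + 2 * a1 \<tau> + 2 * a2 \<tau>)" if "\<tau> \<in> {0..T}" for \<tau>
    unfolding g_def a1_def a2_def by (rule g_bound[OF V cs_Ck[OF s1 that] cs_Ck[OF s2 that] \<pi>1 R])
  define Ip where "Ip \<tau> = (I \<tau> + \<bar>I \<tau>\<bar>) / 2" for \<tau>
  have Ipi: "Ip integrable_on {s..t}"
  proof -
    have "(\<lambda>\<tau>. norm (I \<tau>)) integrable_on {s..t}" using TI(2) absolutely_integrable_on_def by blast
    then have "(\<lambda>\<tau>. I \<tau> + \<bar>I \<tau>\<bar>) integrable_on {s..t}" using integrable_add[OF TI(1)] by simp
    then show ?thesis unfolding Ip_def[abs_def] integrable_on_def using has_integral_divide by blast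
  qed
  have Ipnn: "Ip \<tau> \<ge> 0" for \<tau> by (simp add: Ip_def)
  have "integral {s..t} I \<le> integral {s..t} Ip"
    by (rule integral_le[OF TI(1) Ipi]) (simp add: Ip_def)
  then have "ennreal (integral {s..t} I) \<le> ennreal (integral {s..t} Ip)" by (rule ennreal_leI)
  also have "\<dots> = (\<integral>\<^sup>+ \<tau>. ennreal (indicator {s..t} \<tau> * Ip \<tau>) \<partial>lborel)"
    using nn_integral_has_integral_lebesgue[of "{s..t}" Ip "integral {s..t} Ip"] Ipi Ipnn
    by (simp add: integrable_integral)
  also have "\<dots> \<le> (\<integral>\<^sup>+ \<tau>. ennreal (4/R) * (indicator {0..T} \<tau> + 2 * (a1 \<tau> * indicator {0..T} \<tau>) + 2 * (a2 \<tau> * indicator {0..T} \<tau>)) \<partial>lborel)"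
  proof (rule nn_integral_mono)
    fix \<tau> :: real
    show "ennreal (indicator {s..t} \<tau> * Ip \<tau>) \<le> ennreal (4/R) * (indicator {0..T} \<tau> + 2 * (a1 \<tau> * indicator {0..T} \<tau>) + 2 * (a2 \<tau> * indicator {0..T} \<tau>))"
    proof (cases "\<tau> \<in> {s..t}")
      case True
      then have \<tau>: "\<tau> \<in> {0..T}" using st by auto
      have "Ip \<tau> \<le> max 0 (g \<tau>)" using Ig[OF \<tau>] by (auto simp: Ip_def)
      then have "ennreal (Ip \<tau>) \<le> ennreal (g \<tau>)"
        by (metis ennreal_leI ennreal_max_0 max.commute)
      also have "\<dots> \<le> ennreal (4/R) * (1 + 2 * a1 \<tau> + 2 * a2 \<tau>)" by (rule gb[OF \<tau>])
      finally show ?thesis using True \<tau> by simp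
    qed simp
  qed
  also have "\<dots> = ennreal (4/R) * (ennreal T
        + 2 * (\<integral>\<^sup>+ t\<in>{0..T}. a1 t \<partial>lborel) + 2 * (\<integral>\<^sup>+ t\<in>{0..T}. a2 t \<partial>lborel))"
  proof -
    have m1: "(\<lambda>\<tau>. a1 \<tau> * indicator {0..T} \<tau>) \<in> borel_measurable lborel"
      unfolding a1_def by (rule meas_a[OF s1 V])
    have m2: "(\<lambda>\<tau>. a2 \<tau> * indicator {0..T} \<tau>) \<in> borel_measurable lborel"
      unfolding a2_def by (rule meas_a[OF s2 V])
    have mi: "(\<lambda>\<tau>::real. indicator {0..T} \<tau> :: ennreal) \<in> borel_measurable lborel" by simp
    have T: "(\<integral>\<^sup>+ \<tau>. indicator {0..T} \<tau> \<partial>lborel) = ennreal T" using st by simp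
    show ?thesis using m1 m2 mi T
      by (simp add: nn_integral_cmult nn_integral_add)
  qed
  finally have bnd: "ennreal (integral {s..t} I) \<le> ennreal (4/R) * (ennreal T
        + 2 * (\<integral>\<^sup>+ t\<in>{0..T}. a1 t \<partial>lborel) + 2 * (\<integral>\<^sup>+ t\<in>{0..T}. a2 t \<partial>lborel))" .
  have nn: "0 \<le> integral UNIV (\<lambda>x. psi R x * exp (- V x) * \<bar>\<mu>1 s x - \<mu>2 s x\<bar>)"
  proof (cases "(\<lambda>x. psi R x * exp (- V x) * \<bar>\<mu>1 s x - \<mu>2 s x\<bar>) integrable_on UNIV")
    case True then show ?thesis by (rule integral_nonneg) (simp add: psi_nonneg)
  qed (simp add: not_integrable_integral)
  have "ennreal (integral UNIV (\<lambda>x. psi R x * exp (- V x) * \<bar>\<mu>1 t x - \<mu>2 t x\<bar>))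
     = ennreal (integral UNIV (\<lambda>x. psi R x * exp (- V x) * \<bar>\<mu>1 s x - \<mu>2 s x\<bar>) + integral {s..t} I)"
    using TI(3) by (simp add: algebra_simps)
  also have "\<dots> \<le> ennreal (integral UNIV (\<lambda>x. psi R x * exp (- V x) * \<bar>\<mu>1 s x - \<mu>2 s x\<bar>)) + ennreal (integral {s..t} I)"
    by (rule ennreal_add_le[OF nn])
  also have "\<dots> \<le> ennreal (integral UNIV (\<lambda>x. psi R x * exp (- V x) * \<bar>\<mu>1 s x - \<mu>2 s x\<bar>)) + ennreal (4/R) * (ennreal T
        + 2 * (\<integral>\<^sup>+ t\<in>{0..T}. a1 t \<partial>lborel) + 2 * (\<integral>\<^sup>+ t\<in>{0..T}. a2 t \<partial>lborel))"
    using bnd by (rule add_left_mono)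
  finally show ?thesis unfolding a1_def a2_def .
qed

lemma cont_zero_int:
  fixes h :: "'a::euclidean_space \<Rightarrow> real"
  assumes hc: "continuous_on UNIV h" and hnn: "\<And>x. h x \<ge> 0"
    and z: "(\<integral>\<^sup>+ x. ennreal (h x) \<partial>lborel) = 0"
  shows "h x = 0"
proof (rule ccontr)
  assume "h x \<noteq> 0"
  then have hp: "h x > 0" using hnn[of x] by simp
  define c where "c = h x / 2"
  have c: "c > 0" "c < h x" using hp by (auto simp: c_def)
  have "isCont h x" using hc by (simp add: continuous_on_eq_continuous_at)
  then obtain d where d: "d > 0" "\<And>y. dist y x < d \<Longrightarrow> dist (h y) (h x) < h x - c"
    using c unfolding continuous_at_eps_delta by (metis diff_gt_0_iff_gt)
  have ge: "ennreal c * indicator (ball x d) y \<le> ennreal (h y)" for y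
  proof (cases "y \<in> ball x d")
    case True
    then have "dist y x < d" by (simp add: dist_commute)
    then have "dist (h y) (h x) < h x - c" by (rule d(2))
    then have "c \<le> h y" by (simp add: dist_real_def abs_less_iff)
    then show ?thesis using True by (simp add: ennreal_leI)
  qed simp
  have pos: "emeasure lborel (ball x d) > 0"
  proof -
    have "emeasure lborel (ball x d) = ennreal (measure lborel (ball x d))"
      using emeasure_lborel_ball_finite[of x d] by (intro emeasure_eq_ennreal_measure) simp
    then show ?thesis using content_ball_pos[OF d(1)] by simp
  qed
  have "ennreal c * emeasure lborel (ball x d) = (\<integral>\<^sup>+ y. ennreal c * indicator (ball x d) y \<partial>lborel)"
    by (rule nn_integral_cmult_indicator[symmetric]) simp
  also have "\<dots> \<le> (\<integral>\<^sup>+ y. ennreal (h y) \<partial>lborel)" by (rule nn_integral_mono) (rule ge)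
  finally have "ennreal c * emeasure lborel (ball x d) \<le> 0" using z by simp
  then show False using pos c by (simp add: ennreal_zero_less_mult_iff)
qed

lemma u_cont: "classical_solution V \<beta> T \<mu>1 \<Longrightarrow> classical_solution V \<beta> T \<mu>2 \<Longrightarrow> t \<in> {0..T} \<Longrightarrow>
  continuous_on UNIV (\<lambda>x. \<mu>1 t x - \<mu>2 t x)"
proof -
  assume s1: "classical_solution V \<beta> T \<mu>1" and s2: "classical_solution V \<beta> T \<mu>2" and t: "t \<in> {0..T}"
  have "continuous_on ({0..T} \<times> UNIV) (\<lambda>p. \<mu>1 (fst p) (snd p) - \<mu>2 (fst p) (snd p))"
    using cs_cont[OF s1] cs_cont[OF s2] by (intro continuous_intros)
  moreover have p: "continuous_on UNIV (\<lambda>x::'a. (t, x))" by (intro continuous_intros)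
  ultimately have "continuous_on UNIV (\<lambda>x. \<mu>1 (fst (t, x)) (snd (t, x)) - \<mu>2 (fst (t, x)) (snd (t, x)))"
    by (rule continuous_on_compose2) (use t in auto)
  then show ?thesis by simp
qed

lemma approx:
  assumes V: "smooth V" and s1: "classical_solution V \<beta> T \<mu>1" and s2: "classical_solution V \<beta> T \<mu>2"
    and t: "t \<in> {0..T}" and R: "R > 0"
  shows "(\<integral>\<^sup>+ x. ennreal (psi R x * exp (- V x) * \<bar>\<mu>1 t x - \<mu>2 t x\<bar>) \<partial>lborel)
     = ennreal (integral UNIV (\<lambda>x. psi R x * exp (- V x) * \<bar>\<mu>1 t x - \<mu>2 t x\<bar>))"
proof -
  have c: "continuous_on UNIV (\<lambda>x. psi R x * exp (- V x) * \<bar>\<mu>1 t x - \<mu>2 t x\<bar>)"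
  proof -
    have a: "continuous_on UNIV (\<lambda>x. \<bar>\<mu>1 t x - \<mu>2 t x\<bar>)" by (rule continuous_on_rabs[OF u_cont[OF s1 s2 t]])
    have b: "continuous_on UNIV (\<lambda>x. psi R x * exp (- V x))"
      using psi_cont Ck2_facts(5)[OF smooth_Ck2[OF V]] by (intro continuous_intros)
    show ?thesis by (rule continuous_on_mult[OF b a])
  qed
  have i: "(\<lambda>x. psi R x * exp (- V x) * \<bar>\<mu>1 t x - \<mu>2 t x\<bar>) integrable_on UNIV"
    by (rule compact_support_integrable[OF c, of R]) (simp add: psi_supp[OF R])
  show ?thesis
    using nn_integral_has_integral_lebesgue[of UNIV "\<lambda>x. psi R x * exp (- V x) * \<bar>\<mu>1 t x - \<mu>2 t x\<bar>"] i
    by (simp add: integrable_integral psi_nonneg)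
qed

theorem proposition4:
  fixes V :: "'a::euclidean_space \<Rightarrow> real"
    and \<beta> T :: real
    and \<mu>1 \<mu>2 :: "real \<Rightarrow> 'a \<Rightarrow> real"
  assumes "\<beta> > 0" and "T > 0"
    and "smooth V"
    and "(\<integral>\<^sup>+ x. ennreal (exp (- V x)) \<partial>lborel) = 1"
    and "classical_solution V \<beta> T \<mu>1" and "classical_solution V \<beta> T \<mu>2"
    and "(\<integral>\<^sup>+ t\<in>{0..T}. (\<integral>\<^sup>+ x. ennreal ((norm (grad (\<lambda>y. \<mu>1 t y powr (\<beta> + 1)) x))\<^sup>2
            * exp (- V x)) \<partial>lborel) \<partial>lborel) < \<infinity>"
    and "(\<integral>\<^sup>+ t\<in>{0..T}. (\<integral>\<^sup>+ x. ennreal ((norm (grad (\<lambda>y. \<mu>2 t y powr (\<beta> + 1)) x))\<^sup>2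
            * exp (- V x)) \<partial>lborel) \<partial>lborel) < \<infinity>"
  shows "(\<forall>s\<in>{0..T}. \<forall>t\<in>{0..T}. s \<le> t \<longrightarrow>
            L1pi_dist V (\<mu>1 t) (\<mu>2 t) \<le> L1pi_dist V (\<mu>1 s) (\<mu>2 s))
         \<and> ((\<forall>x. \<mu>1 0 x = \<mu>2 0 x) \<longrightarrow> (\<forall>t\<in>{0..T}. \<forall>x. \<mu>1 t x = \<mu>2 t x))"
proof -
  note \<beta> = assms(1) and V = assms(3) and \<pi>1 = assms(4) and s1 = assms(5) and s2 = assms(6)
  define K where "K = ennreal T
        + 2 * (\<integral>\<^sup>+ t\<in>{0..T}. (\<integral>\<^sup>+ x. ennreal ((norm (grad (\<lambda>y. \<mu>1 t y powr (\<beta> + 1)) x))\<^sup>2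
            * exp (- V x)) \<partial>lborel) \<partial>lborel)
        + 2 * (\<integral>\<^sup>+ t\<in>{0..T}. (\<integral>\<^sup>+ x. ennreal ((norm (grad (\<lambda>y. \<mu>2 t y powr (\<beta> + 1)) x))\<^sup>2
            * exp (- V x)) \<partial>lborel) \<partial>lborel)"
  have "K < \<infinity>" unfolding K_def using assms(7,8) by (simp add: ennreal_mult_less_top)
  then obtain k where k: "K = ennreal k" "0 \<le> k" by (cases K rule: ennreal_cases) auto
  have mono: "L1pi_dist V (\<mu>1 t) (\<mu>2 t) \<le> L1pi_dist V (\<mu>1 s) (\<mu>2 s)"
    if st: "s \<in> {0..T}" "t \<in> {0..T}" "s \<le> t" for s t
  proof -
    define f where "f n x = ennreal (psi (real (Suc n)) x * exp (- V x) * \<bar>\<mu>1 t x - \<mu>2 t x\<bar>)" for n x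
    have cont: "continuous_on UNIV (\<lambda>x. psi R x * exp (- V x) * \<bar>\<mu>1 t x - \<mu>2 t x\<bar>)" for R
    proof -
      have a: "continuous_on UNIV (\<lambda>x. \<bar>\<mu>1 t x - \<mu>2 t x\<bar>)" by (rule continuous_on_rabs[OF u_cont[OF s1 s2 st(2)]])
      have b: "continuous_on UNIV (\<lambda>x. psi R x * exp (- V x))"
        using psi_cont Ck2_facts(5)[OF smooth_Ck2[OF V]] by (intro continuous_intros)
      show ?thesis by (rule continuous_on_mult[OF b a])
    qed
    have inc: "incseq f"
      unfolding incseq_def le_fun_def f_def
    proof (intro allI impI)
      fix m n :: nat and x :: 'a assume "m \<le> n"
      then have "psi (real (Suc m)) x \<le> psi (real (Suc n)) x" by (intro psi_mono) auto
      then show "ennreal (psi (real (Suc m)) x * exp (- V x) * \<bar>\<mu>1 t x - \<mu>2 t x\<bar>)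
          \<le> ennreal (psi (real (Suc n)) x * exp (- V x) * \<bar>\<mu>1 t x - \<mu>2 t x\<bar>)"
        by (intro ennreal_leI mult_right_mono) auto
    qed
    have meas: "f n \<in> borel_measurable lborel" for n
      unfolding f_def[abs_def] by (rule cont_meas[OF cont])
    have pw: "(\<lambda>n. f n x) \<longlonglongrightarrow> ennreal (\<bar>\<mu>1 t x - \<mu>2 t x\<bar> * exp (- V x))" for x
    proof -
      have "(\<lambda>n. psi (real (Suc n)) x * exp (- V x) * \<bar>\<mu>1 t x - \<mu>2 t x\<bar>) \<longlonglongrightarrow> 1 * exp (- V x) * \<bar>\<mu>1 t x - \<mu>2 t x\<bar>"
        by (intro tendsto_intros psi_lim)
      then show ?thesis unfolding f_def by (intro tendsto_ennrealI) (simp add: mult.commute)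
    qed
    have Lt: "(\<lambda>n. integral\<^sup>N lborel (f n)) \<longlonglongrightarrow> L1pi_dist V (\<mu>1 t) (\<mu>2 t)"
      unfolding L1pi_dist_def using nn_integral_LIMSEQ[OF inc meas pw] by simp
    have Rt: "(\<lambda>n. L1pi_dist V (\<mu>1 s) (\<mu>2 s) + ennreal (4 / real (Suc n) * k)) \<longlonglongrightarrow> L1pi_dist V (\<mu>1 s) (\<mu>2 s) + ennreal (4 * 0 * k)"
      by (intro tendsto_intros) (use LIMSEQ_inverse_real_of_nat in \<open>simp add: divide_inverse\<close>)
    have le: "integral\<^sup>N lborel (f n) \<le> L1pi_dist V (\<mu>1 s) (\<mu>2 s) + ennreal (4 / real (Suc n) * k)" for n
    proof -
      have R: "real (Suc n) > 0" by simp
      have "integral\<^sup>N lborel (f n) = ennreal (integral UNIV (\<lambda>x. psi (real (Suc n)) x * exp (- V x) * \<bar>\<mu>1 t x - \<mu>2 t x\<bar>))"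
        unfolding f_def by (rule approx[OF V s1 s2 st(2) R])
      also have "\<dots> \<le> ennreal (integral UNIV (\<lambda>x. psi (real (Suc n)) x * exp (- V x) * \<bar>\<mu>1 s x - \<mu>2 s x\<bar>)) + ennreal (4 / real (Suc n)) * K"
        unfolding K_def using st by (intro main_R[OF \<beta> V \<pi>1 s1 s2 R]) auto
      finally have c1: "integral\<^sup>N lborel (f n) \<le> ennreal (integral UNIV (\<lambda>x. psi (real (Suc n)) x * exp (- V x) * \<bar>\<mu>1 s x - \<mu>2 s x\<bar>)) + ennreal (4 / real (Suc n)) * K" .
      have "ennreal (integral UNIV (\<lambda>x. psi (real (Suc n)) x * exp (- V x) * \<bar>\<mu>1 s x - \<mu>2 s x\<bar>))
          = (\<integral>\<^sup>+ x. ennreal (psi (real (Suc n)) x * exp (- V x) * \<bar>\<mu>1 s x - \<mu>2 s x\<bar>) \<partial>lborel)"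
        by (rule approx[OF V s1 s2 st(1) R, symmetric])
      also have "\<dots> \<le> L1pi_dist V (\<mu>1 s) (\<mu>2 s)"
        unfolding L1pi_dist_def
      proof (rule nn_integral_mono)
        fix x
        have "psi (real (Suc n)) x * (exp (- V x) * \<bar>\<mu>1 s x - \<mu>2 s x\<bar>) \<le> 1 * (exp (- V x) * \<bar>\<mu>1 s x - \<mu>2 s x\<bar>)"
          by (intro mult_right_mono psi_le1) auto
        then show "ennreal (psi (real (Suc n)) x * exp (- V x) * \<bar>\<mu>1 s x - \<mu>2 s x\<bar>) \<le> ennreal (\<bar>\<mu>1 s x - \<mu>2 s x\<bar> * exp (- V x))"
          by (intro ennreal_leI) (simp add: algebra_simps)
      qed
      finally have c2: "ennreal (integral UNIV (\<lambda>x. psi (real (Suc n)) x * exp (- V x) * \<bar>\<mu>1 s x - \<mu>2 s x\<bar>)) \<le> L1pi_dist V (\<mu>1 s) (\<mu>2 s)" .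
      have c: "integral\<^sup>N lborel (f n) \<le> L1pi_dist V (\<mu>1 s) (\<mu>2 s) + ennreal (4 / real (Suc n)) * K"
        using c1 add_right_mono[OF c2] by (rule order_trans)
      have e: "ennreal (4 / real (Suc n)) * K = ennreal (4 / real (Suc n) * k)"
        using k ennreal_mult[of "4 / real (Suc n)" k] by simp
      show ?thesis using c unfolding e .
    qed
    show ?thesis using LIMSEQ_le[OF Lt Rt] le by simp
  qed
  have uniq: "\<mu>1 t x = \<mu>2 t x" if z: "\<forall>x. \<mu>1 0 x = \<mu>2 0 x" and t: "t \<in> {0..T}" for t x
  proof -
    have "L1pi_dist V (\<mu>1 t) (\<mu>2 t) \<le> L1pi_dist V (\<mu>1 0) (\<mu>2 0)"
      using mono[of 0 t] t assms(2) by auto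
    also have "L1pi_dist V (\<mu>1 0) (\<mu>2 0) = 0" using z by (simp add: L1pi_dist_def)
    finally have "(\<integral>\<^sup>+ x. ennreal (\<bar>\<mu>1 t x - \<mu>2 t x\<bar> * exp (- V x)) \<partial>lborel) = 0"
      by (simp add: L1pi_dist_def)
    moreover have "continuous_on UNIV (\<lambda>x. \<bar>\<mu>1 t x - \<mu>2 t x\<bar> * exp (- V x))"
      using continuous_on_rabs[OF u_cont[OF s1 s2 t]] Ck2_facts(5)[OF smooth_Ck2[OF V]]
      by (intro continuous_on_mult) (auto intro!: continuous_intros)
    ultimately have "\<bar>\<mu>1 t x - \<mu>2 t x\<bar> * exp (- V x) = 0"
      by (intro cont_zero_int) auto
    then show ?thesis by simp
  qed
  show ?thesis using mono uniq by blast
qed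

end
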